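(* Let $\Sigma$ be a two-dimensional surface immersed in $\mathbb R^n$ and let $\omega$ be a Gaussian Harmonic one Form (GHF) on $\Sigma$ with dual tangent vector field $W$. Let $\{\nu_\alpha\}$ be a local orthonormal frame of the normal bundle. Then for every tangent vector $v$, $$\mathcal L^\Sigma \omega(v) = K\,\omega(v) + \tfrac12\,\omega(v) - \sum_\alpha \frac{\langle x,\nu_\alpha\rangle}{2}\,A^{\nu_\alpha}(W,v).$$ If moreover $\Sigma$ is a self-shrinker, then for every tangent vector $v$, $$\mathcal L^\Sigma \omega(v) = \tfrac12\,\omega(v) - \sum_\alpha\sum_{j=1}^2 A^{\nu_\alpha}(W,e_j)\,A^{\nu_\alpha}(e_j,v).$$
   Context: $\Sigma$ is a two-dimensional surface immersed in $\mathbb R^n$ with induced metric; $x$ is the position vector, $x^T$ and $x^N$ its tangential and normal projections. $\nabla^E$ is the Euclidean connection, $\nabla^\Sigma=(\nabla^E)^T$ the Levi-Civita connection of $\Sigma$ (also on tensors), $\nabla^N=(\nabla^E)^N$ the normal connection. $\{e_1,e_2\}$ denotes a local orthonormal tangent frame. For a unit normal field $\nu$ and tangent $X,Y$, $A^\nu(X,Y)=\langle\nabla^E_X\nu,Y\rangle$. The mean curvature vector is $H=\sum_\alpha(\operatorname{tr}A^{\nu_\alpha})\nu_\alpha$. $K$ is the Gauss curvature of $\Sigma$. $\Sigma$ is a self-shrinker if $H=\tfrac12 x^N$. For a one-form $\omega$, its dual vector field $W$ is the tangent vector field with $\omega(v)=\langle W,v\rangle$. A Gaussian Harmonic one Form (GHF)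 is a one-form $\omega$ on $\Sigma$ that is closed ($\nabla^\Sigma\omega$ is symmetric) and satisfies $\operatorname{tr}_\Sigma\nabla^\Sigma\omega=\sum_i(\nabla^\Sigma_{e_i}\omega)(e_i)=\tfrac12\,\omega(x^T)$. On tensors, $\mathcal L^\Sigma T=\sum_{i}\nabla^{\Sigma,2}_{e_i,e_i}T-\tfrac12\nabla^\Sigma_{x^T}T$. *)

theory Defs
  imports "HOL-Analysis.Analysis"
begin

text \<open>Local model of an immersed surface: a parametrization F : U \<subseteq> R^2 \<rightarrow> R^n,
  U open.  Position vector x = F p.  All geometric objects are expressed through
  partial derivatives in the parameter domain.\<close>

definition pd :: "(real^2 \<Rightarrow> 'b::real_normed_vector) \<Rightarrow> 2 \<Rightarrow> real^2 \<Rightarrow> 'b" where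
  "pd f i p = vector_derivative (\<lambda>t. f (p + t *\<^sub>R axis i 1)) (at 0)"

fun Ck :: "nat \<Rightarrow> (real^2) set \<Rightarrow> (real^2 \<Rightarrow> 'b::real_normed_vector) \<Rightarrow> bool" where
  "Ck 0 U f = continuous_on U f"
| "Ck (Suc k) U f = (f differentiable_on U \<and> (\<forall>i. Ck k U (pd f i)))"

definition smooth_on2 :: "(real^2) set \<Rightarrow> (real^2 \<Rightarrow> 'b::real_normed_vector) \<Rightarrow> bool" where
  "smooth_on2 U f = (\<forall>k. Ck k U f)"

definition immersion :: "(real^2) set \<Rightarrow> (real^2 \<Rightarrow> real^'n) \<Rightarrow> bool" where
  "immersion U F = (open U \<and> smooth_on2 U F \<and>
     (\<forall>p\<in>U. independent {pd F 1 p, pd F 2 p} \<and> pd F 1 p \<noteq> pd F 2 p))"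

definition Tsp :: "(real^2 \<Rightarrow> real^'n) \<Rightarrow> real^2 \<Rightarrow> (real^'n) set" where
  "Tsp F p = span {pd F 1 p, pd F 2 p}"

definition dF :: "(real^2 \<Rightarrow> real^'n) \<Rightarrow> real^2 \<Rightarrow> real^2 \<Rightarrow> real^'n" where
  "dF F p \<xi> = (\<Sum>i\<in>UNIV. (\<xi> $ i) *\<^sub>R pd F i p)"

definition crd :: "(real^2 \<Rightarrow> real^'n) \<Rightarrow> real^2 \<Rightarrow> real^'n \<Rightarrow> real^2" where
  "crd F p v = (THE \<xi>. dF F p \<xi> = v)"

definition tproj :: "(real^2 \<Rightarrow> real^'n) \<Rightarrow> real^2 \<Rightarrow> real^'n \<Rightarrow> real^'n" where
  "tproj F p v = (THE u. u \<in> Tsp F p \<and> (\<forall>w\<in>Tsp F p. (v - u) \<bullet> w = 0))"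

definition nproj :: "(real^2 \<Rightarrow> real^'n) \<Rightarrow> real^2 \<Rightarrow> real^'n \<Rightarrow> real^'n" where
  "nproj F p v = v - tproj F p v"

definition ddir :: "(real^2 \<Rightarrow> real^'n) \<Rightarrow> (real^2 \<Rightarrow> 'b::real_normed_vector) \<Rightarrow> real^2 \<Rightarrow> real^'n \<Rightarrow> 'b" where
  "ddir F f p v = (\<Sum>i\<in>UNIV. (crd F p v $ i) *\<^sub>R pd f i p)"

text \<open>Christoffel vectors: nabla^Sigma_{d_i} d_j = (D_{d_i} d_j F)^T.\<close>
definition chr :: "(real^2 \<Rightarrow> real^'n) \<Rightarrow> real^2 \<Rightarrow> 2 \<Rightarrow> 2 \<Rightarrow> real^'n" where
  "chr F p i j = tproj F p (pd (pd F j) i p)"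

text \<open>Levi-Civita covariant derivative of a one-form om (a function of the point and
  a tangent vector): (nabla_v om)(u), extended multilinearly from coordinate fields.\<close>
definition nab1 :: "(real^2 \<Rightarrow> real^'n) \<Rightarrow> (real^2 \<Rightarrow> real^'n \<Rightarrow> real)
     \<Rightarrow> real^2 \<Rightarrow> real^'n \<Rightarrow> real^'n \<Rightarrow> real" where
  "nab1 F om p v u = (\<Sum>i\<in>UNIV. \<Sum>j\<in>UNIV. (crd F p v $ i) * (crd F p u $ j) *
      (pd (\<lambda>q. om q (pd F j q)) i p - om p (chr F p i j)))"

definition nab2 :: "(real^2 \<Rightarrow> real^'n) \<Rightarrow> (real^2 \<Rightarrow> real^'n \<Rightarrow> real^'n \<Rightarrow> real)
     \<Rightarrow> real^2 \<Rightarrow> real^'n \<Rightarrow> real^'n \<Rightarrow> real^'n \<Rightarrow> real" where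
  "nab2 F T p v u w = (\<Sum>i\<in>UNIV. \<Sum>j\<in>UNIV. \<Sum>k\<in>UNIV.
      (crd F p v $ i) * (crd F p u $ j) * (crd F p w $ k) *
      (pd (\<lambda>q. T q (pd F j q) (pd F k q)) i p
        - T p (chr F p i j) (pd F k p) - T p (pd F j p) (chr F p i k)))"

definition onframe :: "(real^2 \<Rightarrow> real^'n) \<Rightarrow> real^2 \<Rightarrow> (2 \<Rightarrow> real^'n) \<Rightarrow> bool" where
  "onframe F p e = ((\<forall>i. e i \<in> Tsp F p) \<and> (\<forall>i j. e i \<bullet> e j = (if i = j then 1 else 0)))"

definition efr :: "(real^2 \<Rightarrow> real^'n) \<Rightarrow> real^2 \<Rightarrow> 2 \<Rightarrow> real^'n" where
  "efr F p = (SOME e. onframe F p e)"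

definition trT :: "(real^2 \<Rightarrow> real^'n) \<Rightarrow> real^2 \<Rightarrow> (real^'n \<Rightarrow> real^'n \<Rightarrow> real) \<Rightarrow> real" where
  "trT F p B = (\<Sum>i\<in>UNIV. B (efr F p i) (efr F p i))"

definition Lop :: "(real^2 \<Rightarrow> real^'n) \<Rightarrow> (real^2 \<Rightarrow> real^'n \<Rightarrow> real) \<Rightarrow> real^2 \<Rightarrow> real^'n \<Rightarrow> real" where
  "Lop F om p v = (\<Sum>i\<in>UNIV. nab2 F (nab1 F om) p (efr F p i) (efr F p i) v)
      - (1/2) * nab1 F om p (tproj F p (F p)) v"

definition GHF :: "(real^2) set \<Rightarrow> (real^2 \<Rightarrow> real^'n) \<Rightarrow> (real^2 \<Rightarrow> real^'n \<Rightarrow> real) \<Rightarrow> bool" where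
  "GHF U F om = (\<forall>p\<in>U.
      (\<forall>u\<in>Tsp F p. \<forall>v\<in>Tsp F p. nab1 F om p u v = nab1 F om p v u) \<and>
      trT F p (nab1 F om p) = (1/2) * om p (tproj F p (F p)))"

text \<open>Gauss curvature via the intrinsic Riemann tensor:
  K = <R(d1,d2)d2, d1> / (|d1|^2 |d2|^2 - <d1,d2>^2),
  R(X,Y)Z = nabla_X nabla_Y Z - nabla_Y nabla_X Z (coordinate fields commute).\<close>
definition gaussK :: "(real^2 \<Rightarrow> real^'n) \<Rightarrow> real^2 \<Rightarrow> real" where
  "gaussK F p =
     ((tproj F p (pd (\<lambda>q. tproj F q (pd (pd F 2) 2 q)) 1 p)
       - tproj F p (pd (\<lambda>q. tproj F q (pd (pd F 2) 1 q)) 2 p)) \<bullet> pd F 1 p)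
     / ((pd F 1 p \<bullet> pd F 1 p) * (pd F 2 p \<bullet> pd F 2 p) - (pd F 1 p \<bullet> pd F 2 p)^2)"

definition normal_frame :: "(real^2) set \<Rightarrow> (real^2 \<Rightarrow> real^'n) \<Rightarrow> (nat \<Rightarrow> real^2 \<Rightarrow> real^'n) \<Rightarrow> bool" where
  "normal_frame U F \<nu> = (\<forall>a < CARD('n) - 2. smooth_on2 U (\<nu> a) \<and>
      (\<forall>p\<in>U. (\<forall>w\<in>Tsp F p. \<nu> a p \<bullet> w = 0) \<and>
        (\<forall>b < CARD('n) - 2. \<nu> a p \<bullet> \<nu> b p = (if a = b then 1 else 0))))"

definition Aform :: "(real^2 \<Rightarrow> real^'n) \<Rightarrow> (real^2 \<Rightarrow> real^'n) \<Rightarrow> real^2 \<Rightarrow> real^'n \<Rightarrow> real^'n \<Rightarrow> real" where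
  "Aform F \<nu> p X Y = ddir F \<nu> p X \<bullet> Y"

definition Hvec :: "(real^2 \<Rightarrow> real^'n) \<Rightarrow> (nat \<Rightarrow> real^2 \<Rightarrow> real^'n) \<Rightarrow> real^2 \<Rightarrow> real^'n" where
  "Hvec F \<nu> p = (\<Sum>a<CARD('n) - 2. trT F p (Aform F (\<nu> a) p) *\<^sub>R \<nu> a p)"

definition self_shrinker :: "(real^2) set \<Rightarrow> (real^2 \<Rightarrow> real^'n) \<Rightarrow> (nat \<Rightarrow> real^2 \<Rightarrow> real^'n) \<Rightarrow> bool" where
  "self_shrinker U F \<nu> = (\<forall>p\<in>U. Hvec F \<nu> p = (1/2) *\<^sub>R nproj F p (F p))"

end

theory Submission
  imports Defs
begin


lemma pd_has:
  assumes "(f has_derivative f') (at p)"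
  shows "pd f i p = f' (axis i 1)"
proof -
  have l: "((\<lambda>t::real. p + t *\<^sub>R axis i (1::real)) has_derivative (\<lambda>t. t *\<^sub>R axis i 1)) (at 0)"
    by (auto intro!: derivative_eq_intros)
  have f0: "(f has_derivative f') (at ((\<lambda>t::real. p + t *\<^sub>R axis i (1::real)) 0))" using assms by simp
  have "((\<lambda>t. f (p + t *\<^sub>R axis i 1)) has_derivative (\<lambda>t. f' (t *\<^sub>R axis i 1))) (at 0)"
    using diff_chain_at[OF l f0] by (simp add: o_def)
  moreover have "(\<lambda>t. f' (t *\<^sub>R axis i 1)) = (\<lambda>t. t *\<^sub>R f' (axis i 1))"
    using assms has_derivative_bounded_linear linear_scale linear_simps(5) by blast
  ultimately have "((\<lambda>t. f (p + t *\<^sub>R axis i 1)) has_vector_derivative f' (axis i 1)) (at 0)"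
    by (simp add: has_vector_derivative_def)
  then show ?thesis unfolding pd_def by (rule vector_derivative_at)
qed

lemma pd_frechet:
  assumes "f differentiable (at p)"
  shows "pd f i p = frechet_derivative f (at p) (axis i 1)"
  using assms frechet_derivative_works pd_has by blast

lemma pd_local:
  assumes "open U" "p \<in> U" "\<And>q. q \<in> U \<Longrightarrow> f q = g q"
  shows "pd f i p = pd g i p"
proof -
  obtain r where r: "r > 0" "ball p r \<subseteq> U" using assms(1,2) open_contains_ball by blast
  have "eventually (\<lambda>t::real. t \<in> UNIV \<longrightarrow> f (p + t *\<^sub>R axis i 1) = g (p + t *\<^sub>R axis i 1)) (nhds 0)"
    unfolding eventually_nhds_metric
  proof (intro exI[of _ r] conjI allI impI)
    fix t :: real assume "dist t 0 < r"
    then have "p + t *\<^sub>R axis i 1 \<in> ball p r" by (simp add: dist_norm)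
    then show "f (p + t *\<^sub>R axis i 1) = g (p + t *\<^sub>R axis i 1)" using r assms(3) by blast
  qed (use r in auto)
  then show ?thesis unfolding pd_def by (intro vector_derivative_cong_eq) auto
qed

lemma line_vderiv:
  assumes "(f has_derivative f') (at (q + t0 *\<^sub>R a))"
  shows "((\<lambda>t. f (q + t *\<^sub>R a)) has_vector_derivative f' a) (at t0 within S)"
proof -
  have l: "((\<lambda>t::real. q + t *\<^sub>R a) has_derivative (\<lambda>t. t *\<^sub>R a)) (at t0 within S)"
    by (auto intro!: derivative_eq_intros)
  have "((\<lambda>t. f (q + t *\<^sub>R a)) has_derivative (\<lambda>t. f' (t *\<^sub>R a))) (at t0 within S)"
    using diff_chain_within[OF l has_derivative_at_withinI[OF assms]] by (simp add: o_def)
  moreover have "(\<lambda>t. f' (t *\<^sub>R a)) = (\<lambda>t. t *\<^sub>R f' a)"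
    using assms has_derivative_bounded_linear linear_scale linear_simps(5) by blast
  ultimately show ?thesis by (simp add: has_vector_derivative_def)
qed

lemma clairaut_core:
  fixes f :: "real^2 \<Rightarrow> 'b::real_normed_vector"
  assumes U: "open U" "p \<in> U" and fd: "\<And>q. q \<in> U \<Longrightarrow> f differentiable (at q)"
    and gd: "pd f i differentiable (at p)" and e: "e > 0"
  shows "\<exists>d>0. \<forall>h. 0 < h \<and> h < d \<longrightarrow>
     norm (f (p + h *\<^sub>R axis i 1 + h *\<^sub>R axis j 1) - f (p + h *\<^sub>R axis i 1) - f (p + h *\<^sub>R axis j 1) + f p
        - (h * h) *\<^sub>R pd (pd f i) j p) \<le> 5 * e * (h * h)"
proof -
  define a :: "real^2" where "a = axis i 1"
  define b :: "real^2" where "b = axis j 1"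
  define g where "g = pd f i"
  obtain L where L: "(g has_derivative L) (at p)" using gd g_def differentiable_def by blast
  have Lb: "pd g j p = L b" using pd_has[OF L] b_def by simp
  have linL: "linear L" using L has_derivative_linear by blast
  obtain d1 where d1: "d1 > 0" "\<And>y. norm (y - p) < d1 \<Longrightarrow> norm (g y - g p - L (y - p)) \<le> e * norm (y - p)"
    using L e unfolding has_derivative_at_alt by blast
  obtain d0 where d0: "d0 > 0" "ball p d0 \<subseteq> U" using U open_contains_ball by blast
  define r where "r y = g (p + y) - g p - L y" for y
  have rb: "norm (r y) \<le> e * norm y" if "norm y < d1" for y
    using d1(2)[of "p + y"] that by (simp add: r_def)
  have na: "norm (t *\<^sub>R a) = \<bar>t\<bar>" for t by (simp add: a_def)
  have nb: "norm (t *\<^sub>R b) = \<bar>t\<bar>" for t by (simp add: b_def)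
  have na1: "norm a = 1" "norm b = 1" by (simp_all add: a_def b_def)
  show ?thesis
  proof (intro exI[of _ "min d0 d1 / 2"] conjI allI impI)
    show "min d0 d1 / 2 > 0" using d0 d1 by simp
    fix h :: real assume h: "0 < h \<and> h < min d0 d1 / 2"
    define phi where "phi t = f (p + h *\<^sub>R b + t *\<^sub>R a) - f (p + t *\<^sub>R a)" for t
    define phi' where "phi' t = g (p + h *\<^sub>R b + t *\<^sub>R a) - g (p + t *\<^sub>R a)" for t
    have small: "norm (t *\<^sub>R a + s *\<^sub>R b) < min d0 d1" if "\<bar>t\<bar> \<le> h" "\<bar>s\<bar> \<le> h" for t s
    proof -
      have "norm (t *\<^sub>R a + s *\<^sub>R b) \<le> \<bar>t\<bar> + \<bar>s\<bar>" using norm_triangle_ineq[of "t *\<^sub>R a" "s *\<^sub>R b"] na nb by metis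
      then show ?thesis using that h by linarith
    qed
    have inU: "p + (t *\<^sub>R a + s *\<^sub>R b) \<in> U" if "\<bar>t\<bar> \<le> h" "\<bar>s\<bar> \<le> h" for t s
    proof -
      have "dist p (p + (t *\<^sub>R a + s *\<^sub>R b)) = norm (t *\<^sub>R a + s *\<^sub>R b)"
        by (metis (no_types) dist_norm dist_commute add_diff_cancel_left')
      then show ?thesis using small[OF that] d0 by (auto intro!: subsetD[OF d0(2)])
    qed
    have der: "(phi has_vector_derivative phi' t) (at t within {0..h})" if "t \<in> {0..h}" for t
    proof -
      have t: "\<bar>t\<bar> \<le> h" using that h by auto
      obtain f1 where f1: "(f has_derivative f1) (at (p + h *\<^sub>R b + t *\<^sub>R a))"
        using fd[OF inU[OF t, of h]] h by (auto simp: differentiable_def algebra_simps)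
      obtain f2 where f2: "(f has_derivative f2) (at (p + t *\<^sub>R a))"
        using fd[OF inU[OF t, of 0]] h by (auto simp: differentiable_def)
      have "f1 a = g (p + h *\<^sub>R b + t *\<^sub>R a)" using pd_has[OF f1] g_def a_def by simp
      moreover have "f2 a = g (p + t *\<^sub>R a)" using pd_has[OF f2] g_def a_def by simp
      moreover have "((\<lambda>t. f (p + h *\<^sub>R b + t *\<^sub>R a)) has_vector_derivative f1 a) (at t within {0..h})"
        using line_vderiv[OF f1] .
      moreover have "((\<lambda>t. f (p + t *\<^sub>R a)) has_vector_derivative f2 a) (at t within {0..h})"
        using line_vderiv[OF f2] .
      ultimately show ?thesis unfolding phi_def phi'_def
        by (metis (no_types) has_vector_derivative_diff)
    qed
    have B: "norm (phi' t - phi' 0) \<le> 4 * e * h" if "t \<in> {0..h}" for t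
    proof -
      have t: "\<bar>t\<bar> \<le> h" using that h by auto
      have eqr: "phi' t - phi' 0 = r (t *\<^sub>R a + h *\<^sub>R b) - r (t *\<^sub>R a) - r (h *\<^sub>R b)"
        unfolding phi'_def r_def using linL by (simp add: linear_add algebra_simps)
      have "norm (r (t *\<^sub>R a + h *\<^sub>R b)) \<le> e * (2 * h)"
      proof -
        have "norm (r (t *\<^sub>R a + h *\<^sub>R b)) \<le> e * norm (t *\<^sub>R a + h *\<^sub>R b)"
          using rb small[OF t, of h] h by simp
        also have "\<dots> \<le> e * (2 * h)"
          using norm_triangle_ineq[of "t *\<^sub>R a" "h *\<^sub>R b"] na nb na1 t h e by (intro mult_left_mono) auto
        finally show ?thesis .
      qed
      moreover have "norm (r (t *\<^sub>R a)) \<le> e * h"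
      proof -
        have "norm (r (t *\<^sub>R a)) \<le> e * norm (t *\<^sub>R a)" using rb[of "t *\<^sub>R a"] small[OF t, of 0] h by simp
        also have "\<dots> \<le> e * h" using na na1 t e by (intro mult_left_mono) auto
        finally show ?thesis .
      qed
      moreover have "norm (r (h *\<^sub>R b)) \<le> e * h"
        using rb[of "h *\<^sub>R b"] small[of 0 h] nb na1 h by simp
      ultimately show ?thesis unfolding eqr
        using norm_triangle_ineq4[of "r (t *\<^sub>R a + h *\<^sub>R b) - r (t *\<^sub>R a)" "r (h *\<^sub>R b)"]
          norm_triangle_ineq4[of "r (t *\<^sub>R a + h *\<^sub>R b)" "r (t *\<^sub>R a)"] by linarith
    qed
    have "norm (phi h - phi 0 - (h - 0) *\<^sub>R phi' 0) \<le> norm (h - 0) * (4 * e * h)"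
      by (rule vector_differentiable_bound_linearization[OF der _ B]) (use h in \<open>auto simp: closed_segment_eq_real_ivl\<close>)
    moreover have "norm (h - 0) * (4 * e * h) = 4 * e * (h * h)" using h by simp
    ultimately have 1: "norm (phi h - phi 0 - h *\<^sub>R phi' 0) \<le> 4 * e * (h * h)" by (simp only: diff_zero)
    have "phi' 0 = h *\<^sub>R L b + r (h *\<^sub>R b)" unfolding phi'_def r_def using linL
      by (simp add: linear_scale)
    then have 2: "h *\<^sub>R phi' 0 = (h * h) *\<^sub>R L b + h *\<^sub>R r (h *\<^sub>R b)" by (simp add: scaleR_add_right)
    have 3: "norm (h *\<^sub>R r (h *\<^sub>R b)) \<le> e * (h * h)"
      using rb[of "h *\<^sub>R b"] small[of 0 h] nb na1 h by (simp add: mult_left_mono)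
    have eq: "f (p + h *\<^sub>R axis i 1 + h *\<^sub>R axis j 1) - f (p + h *\<^sub>R axis i 1) - f (p + h *\<^sub>R axis j 1) + f p
        - (h * h) *\<^sub>R pd (pd f i) j p = (phi h - phi 0 - h *\<^sub>R phi' 0) + h *\<^sub>R r (h *\<^sub>R b)"
    proof -
      have Lb': "pd (pd f i) j p = L b" using Lb g_def by simp
      have e1: "p + h *\<^sub>R b + h *\<^sub>R a = p + h *\<^sub>R a + h *\<^sub>R b" by (simp add: algebra_simps)
      show ?thesis unfolding 2 phi_def Lb' a_def[symmetric] b_def[symmetric] e1 by simp
    qed
    show "norm (f (p + h *\<^sub>R axis i 1 + h *\<^sub>R axis j 1) - f (p + h *\<^sub>R axis i 1) - f (p + h *\<^sub>R axis j 1) + f p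
        - (h * h) *\<^sub>R pd (pd f i) j p) \<le> 5 * e * (h * h)"
      unfolding eq using 1 3 norm_triangle_ineq[of "phi h - phi 0 - h *\<^sub>R phi' 0" "h *\<^sub>R r (h *\<^sub>R b)"] by linarith
  qed
qed

lemma clairaut:
  fixes f :: "real^2 \<Rightarrow> 'b::real_normed_vector"
  assumes U: "open U" "p \<in> U" and fd: "\<And>q. q \<in> U \<Longrightarrow> f differentiable (at q)"
    and gd: "\<And>i. pd f i differentiable (at p)"
  shows "pd (pd f i) j p = pd (pd f j) i p"
proof -
  let ?D = "pd (pd f i) j p - pd (pd f j) i p"
  have "norm ?D \<le> 10 * e" if e: "e > 0" for e
  proof -
    obtain d1 where d1: "d1 > 0" "\<forall>h. 0 < h \<and> h < d1 \<longrightarrow>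
     norm (f (p + h *\<^sub>R axis i 1 + h *\<^sub>R axis j 1) - f (p + h *\<^sub>R axis i 1) - f (p + h *\<^sub>R axis j 1) + f p
        - (h * h) *\<^sub>R pd (pd f i) j p) \<le> 5 * e * (h * h)"
      using clairaut_core[OF U fd gd e] by blast
    obtain d2 where d2: "d2 > 0" "\<forall>h. 0 < h \<and> h < d2 \<longrightarrow>
     norm (f (p + h *\<^sub>R axis j 1 + h *\<^sub>R axis i 1) - f (p + h *\<^sub>R axis j 1) - f (p + h *\<^sub>R axis i 1) + f p
        - (h * h) *\<^sub>R pd (pd f j) i p) \<le> 5 * e * (h * h)"
      using clairaut_core[OF U fd gd e] by blast
    define h where "h = min d1 d2 / 2"
    have h: "0 < h" "h < d1" "h < d2" using d1 d2 by (auto simp: h_def)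
    define X where "X = f (p + h *\<^sub>R axis i 1 + h *\<^sub>R axis j 1) - f (p + h *\<^sub>R axis i 1) - f (p + h *\<^sub>R axis j 1) + f p"
    have X2: "X = f (p + h *\<^sub>R axis j 1 + h *\<^sub>R axis i 1) - f (p + h *\<^sub>R axis j 1) - f (p + h *\<^sub>R axis i 1) + f p"
      unfolding X_def by (simp add: algebra_simps)
    have a: "norm (X - (h * h) *\<^sub>R pd (pd f i) j p) \<le> 5 * e * (h * h)" using d1 h X_def by blast
    have b: "norm (X - (h * h) *\<^sub>R pd (pd f j) i p) \<le> 5 * e * (h * h)" using d2 h unfolding X2 by blast
    have eqD: "(h * h) *\<^sub>R ?D = (X - (h * h) *\<^sub>R pd (pd f j) i p) - (X - (h * h) *\<^sub>R pd (pd f i) j p)"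
      by (simp add: algebra_simps)
    have "norm ((h * h) *\<^sub>R ?D) \<le> 10 * e * (h * h)"
      unfolding eqD using a b norm_triangle_ineq4[of "X - (h * h) *\<^sub>R pd (pd f j) i p" "X - (h * h) *\<^sub>R pd (pd f i) j p"]
      by linarith
    moreover have "norm ((h * h) *\<^sub>R ?D) = (h * h) * norm ?D" using h by (simp only: norm_scaleR) simp
    ultimately have "(h * h) * norm ?D \<le> (h * h) * (10 * e)" by (simp add: algebra_simps)
    then show ?thesis using h by (simp add: mult_le_cancel_left_pos)
  qed
  note * = this
  show ?thesis
  proof (rule ccontr)
    assume "\<not> ?thesis"
    then have "norm ?D > 0" by simp
    then have "norm ?D \<le> 10 * (norm ?D / 20)" using *[of "norm ?D / 20"] by simp
    then show False using \<open>norm ?D > 0\<close> by simp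
  qed
qed



lemma smooth_pd: "smooth_on2 U f \<Longrightarrow> smooth_on2 U (pd f i)"
  unfolding smooth_on2_def by (metis Ck.simps(2))

lemma smooth_diff: "smooth_on2 U f \<Longrightarrow> open U \<Longrightarrow> q \<in> U \<Longrightarrow> f differentiable (at q)"
  unfolding smooth_on2_def
  by (metis Ck.simps(2) differentiable_on_eq_differentiable_at)

lemma smooth_clairaut:
  assumes "smooth_on2 U f" "open U" "p \<in> U"
  shows "pd (pd f i) j p = pd (pd f j) i p"
  by (rule clairaut[OF assms(2,3)]) (use assms smooth_diff smooth_pd in blast)+

lemma pd_inner:
  assumes "f differentiable (at p)" "g differentiable (at p)"
  shows "pd (\<lambda>q. f q \<bullet> g q) i p = pd f i p \<bullet> g p + f p \<bullet> pd g i p"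
proof -
  obtain f' where f': "(f has_derivative f') (at p)" using assms(1) differentiable_def by blast
  obtain g' where g': "(g has_derivative g') (at p)" using assms(2) differentiable_def by blast
  have "((\<lambda>q. f q \<bullet> g q) has_derivative (\<lambda>h. f p \<bullet> g' h + f' h \<bullet> g p)) (at p)"
    by (rule has_derivative_inner[OF f' g'])
  from pd_has[OF this] pd_has[OF f'] pd_has[OF g'] show ?thesis by simp
qed

lemma pd_mult:
  fixes f g :: "real^2 \<Rightarrow> real"
  assumes "f differentiable (at p)" "g differentiable (at p)"
  shows "pd (\<lambda>q. f q * g q) i p = pd f i p * g p + f p * pd g i p"
proof -
  obtain f' where f': "(f has_derivative f') (at p)" using assms(1) differentiable_def by blast
  obtain g' where g': "(g has_derivative g') (at p)" using assms(2) differentiable_def by blast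
  have "((\<lambda>q. f q * g q) has_derivative (\<lambda>h. f p * g' h + f' h * g p)) (at p)"
    by (rule has_derivative_mult[OF f' g'])
  from pd_has[OF this] pd_has[OF f'] pd_has[OF g'] show ?thesis by simp
qed

lemma pd_scaleR:
  fixes f :: "real^2 \<Rightarrow> real"
  assumes "f differentiable (at p)" "g differentiable (at p)"
  shows "pd (\<lambda>q. f q *\<^sub>R g q) i p = pd f i p *\<^sub>R g p + f p *\<^sub>R pd g i p"
proof -
  obtain f' where f': "(f has_derivative f') (at p)" using assms(1) differentiable_def by blast
  obtain g' where g': "(g has_derivative g') (at p)" using assms(2) differentiable_def by blast
  have "((\<lambda>q. f q *\<^sub>R g q) has_derivative (\<lambda>h. f p *\<^sub>R g' h + f' h *\<^sub>R g p)) (at p)"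
    by (rule has_derivative_scaleR[OF f' g'])
  from pd_has[OF this] pd_has[OF f'] pd_has[OF g'] show ?thesis by simp
qed

lemma pd_add:
  assumes "f differentiable (at p)" "g differentiable (at p)"
  shows "pd (\<lambda>q. f q + g q) i p = pd f i p + pd g i p"
proof -
  obtain f' where f': "(f has_derivative f') (at p)" using assms(1) differentiable_def by blast
  obtain g' where g': "(g has_derivative g') (at p)" using assms(2) differentiable_def by blast
  from pd_has[OF has_derivative_add[OF f' g']] pd_has[OF f'] pd_has[OF g'] show ?thesis by simp
qed

lemma pd_diff:
  assumes "f differentiable (at p)" "g differentiable (at p)"
  shows "pd (\<lambda>q. f q - g q) i p = pd f i p - pd g i p"
proof -
  obtain f' where f': "(f has_derivative f') (at p)" using assms(1) differentiable_def by blast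
  obtain g' where g': "(g has_derivative g') (at p)" using assms(2) differentiable_def by blast
  from pd_has[OF has_derivative_diff[OF f' g']] pd_has[OF f'] pd_has[OF g'] show ?thesis by simp
qed

lemma pd_const: "pd (\<lambda>q. c) i p = 0"
proof -
  have "((\<lambda>q::real^2. c) has_derivative (\<lambda>h. 0)) (at p)" by simp
  from pd_has[OF this] show ?thesis by simp
qed

lemma pd_sum:
  assumes "finite A" "\<And>a. a \<in> A \<Longrightarrow> f a differentiable (at p)"
  shows "pd (\<lambda>q. \<Sum>a\<in>A. f a q) i p = (\<Sum>a\<in>A. pd (f a) i p)"
  using assms
proof (induction A rule: finite_induct)
  case empty then show ?case by (simp add: pd_const)
next
  case (insert x F)
  have d: "(\<lambda>q. \<Sum>a\<in>F. f a q) differentiable (at p)"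
    using insert by (intro differentiable_sum) auto
  have "pd (\<lambda>q. \<Sum>a\<in>insert x F. f a q) i p = pd (\<lambda>q. f x q + (\<Sum>a\<in>F. f a q)) i p"
    using insert by simp
  also have "\<dots> = pd (f x) i p + pd (\<lambda>q. \<Sum>a\<in>F. f a q) i p"
    using pd_add[OF _ d, of "f x"] insert by simp
  finally show ?case using insert by simp
qed

lemma pd_zero_on:
  assumes "open U" "p \<in> U" "\<And>q. q \<in> U \<Longrightarrow> f q = 0"
  shows "pd f i p = 0"
  using pd_local[OF assms] pd_const by simp



definition gm :: "(real^2 \<Rightarrow> real^'n) \<Rightarrow> real^2 \<Rightarrow> 2 \<Rightarrow> 2 \<Rightarrow> real" where
  "gm F q i j = pd F i q \<bullet> pd F j q"
definition gdet :: "(real^2 \<Rightarrow> real^'n) \<Rightarrow> real^2 \<Rightarrow> real" where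
  "gdet F q = gm F q 1 1 * gm F q 2 2 - (gm F q 1 2)\<^sup>2"
definition gi :: "(real^2 \<Rightarrow> real^'n) \<Rightarrow> real^2 \<Rightarrow> 2 \<Rightarrow> 2 \<Rightarrow> real" where
  "gi F q i j = (if i = j then (if i = 1 then gm F q 2 2 else gm F q 1 1) else - gm F q 1 2) / gdet F q"
definition Fd :: "(real^2 \<Rightarrow> real^'n) \<Rightarrow> real^2 \<Rightarrow> 2 \<Rightarrow> real^'n" where
  "Fd F q i = (\<Sum>j\<in>UNIV. gi F q i j *\<^sub>R pd F j q)"

definition reg :: "(real^2 \<Rightarrow> real^'n) \<Rightarrow> real^2 \<Rightarrow> bool" where
  "reg F q = (independent {pd F 1 q, pd F 2 q} \<and> pd F 1 q \<noteq> pd F 2 q)"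

lemma two_neq: "(1::2) \<noteq> 2" by simp

lemma gm_sym: "gm F q i j = gm F q j i" by (simp add: gm_def inner_commute)

lemma gdet_pos:
  assumes "reg F q" shows "gdet F q > 0"
proof -
  let ?a = "pd F 1 q" and ?b = "pd F 2 q"
  have ind: "independent {?b}" and nsp: "?a \<notin> span {?b}"
    using assms unfolding reg_def by (auto simp: independent_insert)
  have b0: "?b \<noteq> 0" using ind by simp
  then have bb: "?b \<bullet> ?b > 0" by simp
  define u where "u = ?a - ((?a \<bullet> ?b) / (?b \<bullet> ?b)) *\<^sub>R ?b"
  have "u \<noteq> 0"
  proof
    assume "u = 0"
    then have "?a = ((?a \<bullet> ?b) / (?b \<bullet> ?b)) *\<^sub>R ?b" by (simp add: u_def)
    then have "?a \<in> span {?b}" by (metis span_base span_scale singletonI)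
    then show False using nsp by simp
  qed
  then have uu: "u \<bullet> u > 0" by simp
  have "u \<bullet> u = (?a \<bullet> ?a) - (?a \<bullet> ?b)^2 / (?b \<bullet> ?b)"
    unfolding u_def using bb by (simp add: inner_diff_left inner_diff_right inner_commute power2_eq_square field_simps)
  then have "gdet F q = (?b \<bullet> ?b) * (u \<bullet> u)"
    using bb unfolding gdet_def gm_def by (simp add: field_simps power2_eq_square)
  then show ?thesis using bb uu by simp
qed

lemma Fd_dual4:
  assumes "reg F q"
  shows "Fd F q 1 \<bullet> pd F 1 q = 1" "Fd F q 1 \<bullet> pd F 2 q = 0" "Fd F q 2 \<bullet> pd F 1 q = 0" "Fd F q 2 \<bullet> pd F 2 q = 1"
    "pd F 1 q \<bullet> Fd F q 1 = 1" "pd F 2 q \<bullet> Fd F q 1 = 0" "pd F 1 q \<bullet> Fd F q 2 = 0" "pd F 2 q \<bullet> Fd F q 2 = 1"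
proof -
  have d: "gdet F q \<noteq> 0" using gdet_pos[OF assms] by simp
  have g: "gm F q 2 1 = gm F q 1 2" by (rule gm_sym)
  have e: "gm F q 1 1 * gm F q 2 2 - gm F q 1 2 * gm F q 1 2 = gdet F q" by (simp add: gdet_def power2_eq_square)
  have dd: "pd F 1 q \<bullet> pd F 1 q * (pd F 2 q \<bullet> pd F 2 q) - (pd F 1 q \<bullet> pd F 2 q) * (pd F 1 q \<bullet> pd F 2 q) \<noteq> 0"
    using d by (simp add: gdet_def gm_def power2_eq_square)
  have x1: "c / (a * c - b * b) * a + - b / (a * c - b * b) * b = 1"
    "c / (a * c - b * b) * b + - b / (a * c - b * b) * c = 0"
    "- b / (a * c - b * b) * a + a / (a * c - b * b) * b = 0"
    "- b / (a * c - b * b) * b + a / (a * c - b * b) * c = 1"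
    if "a * c - b * b \<noteq> (0::real)" for a b c
  proof -
    define D where "D = a * c - b * b"
    have "D \<noteq> 0" using that D_def by simp
    then show "c / (a * c - b * b) * a + - b / (a * c - b * b) * b = 1"
      "c / (a * c - b * b) * b + - b / (a * c - b * b) * c = 0"
      "- b / (a * c - b * b) * a + a / (a * c - b * b) * b = 0"
      "- b / (a * c - b * b) * b + a / (a * c - b * b) * c = 1"
      unfolding D_def[symmetric]
      by (simp add: field_simps, simp add: D_def algebra_simps)+
  qed
  define a where "a = pd F 1 q \<bullet> pd F 1 q"
  define b where "b = pd F 1 q \<bullet> pd F 2 q"
  define c where "c = pd F 2 q \<bullet> pd F 2 q"
  have b': "pd F 2 q \<bullet> pd F 1 q = b" by (simp add: b_def inner_commute)
  have dd': "a * c - b * b \<noteq> 0" using dd by (simp add: a_def b_def c_def)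
  have Fd1: "Fd F q 1 = (c / (a * c - b * b)) *\<^sub>R pd F 1 q + (- b / (a * c - b * b)) *\<^sub>R pd F 2 q"
    unfolding Fd_def sum_2 gi_def gdet_def gm_def a_def b_def c_def by (simp add: power2_eq_square)
  have Fd2: "Fd F q 2 = (- b / (a * c - b * b)) *\<^sub>R pd F 1 q + (a / (a * c - b * b)) *\<^sub>R pd F 2 q"
    unfolding Fd_def sum_2 gi_def gdet_def gm_def a_def b_def c_def by (simp add: power2_eq_square)
  have a1: "Fd F q 1 \<bullet> pd F 1 q = 1" "Fd F q 1 \<bullet> pd F 2 q = 0" "Fd F q 2 \<bullet> pd F 1 q = 0" "Fd F q 2 \<bullet> pd F 2 q = 1"
    unfolding Fd1 Fd2 inner_add_left inner_scaleR_left a_def[symmetric] b_def[symmetric] c_def[symmetric] b'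
    using x1[OF dd'] by simp_all
  show "Fd F q 1 \<bullet> pd F 1 q = 1" "Fd F q 1 \<bullet> pd F 2 q = 0" "Fd F q 2 \<bullet> pd F 1 q = 0" "Fd F q 2 \<bullet> pd F 2 q = 1"
    "pd F 1 q \<bullet> Fd F q 1 = 1" "pd F 2 q \<bullet> Fd F q 1 = 0" "pd F 1 q \<bullet> Fd F q 2 = 0" "pd F 2 q \<bullet> Fd F q 2 = 1"
    using a1 by (simp_all add: inner_commute)
qed

lemma Fd_dual:
  assumes "reg F q" shows "Fd F q i \<bullet> pd F j q = (if i = j then 1 else 0)"
  using Fd_dual4[OF assms] exhaust_2[of i] exhaust_2[of j] by auto

lemma Fd_Fd:
  assumes "reg F q" shows "Fd F q i \<bullet> Fd F q j = gi F q i j"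
proof -
  have "Fd F q i \<bullet> Fd F q j = (\<Sum>k\<in>UNIV. gi F q j k * (Fd F q i \<bullet> pd F k q))"
    unfolding Fd_def[of F q j] by (simp add: inner_sum_right)
  also have "\<dots> = gi F q j i" using Fd_dual4[OF assms] exhaust_2[of i] by (auto simp: sum_2)
  also have "\<dots> = gi F q i j" by (auto simp: gi_def gm_sym)
  finally show ?thesis .
qed

lemma gi_sym: "gi F q i j = gi F q j i" by (auto simp: gi_def)

lemma Tsp_iff: "u \<in> Tsp F q \<longleftrightarrow> (\<exists>c d. u = c *\<^sub>R pd F 1 q + d *\<^sub>R pd F 2 q)"
  unfolding Tsp_def span_insert span_singleton by (auto simp: algebra_simps)

lemma Tsp_subspace: "subspace (Tsp F q)" unfolding Tsp_def by simp

lemma pd_in_Tsp: "pd F i q \<in> Tsp F q"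
  unfolding Tsp_def using exhaust_2[of i] by (auto intro: span_base)

lemma Fd_in_Tsp: "Fd F q i \<in> Tsp F q"
  unfolding Fd_def by (intro subspace_sum[OF Tsp_subspace] subspace_scale[OF Tsp_subspace] pd_in_Tsp)

lemma tang_perp_zero:
  assumes "u \<in> Tsp F q" "\<And>j. u \<bullet> pd F j q = 0" shows "u = 0"
proof -
  obtain c d where u: "u = c *\<^sub>R pd F 1 q + d *\<^sub>R pd F 2 q" using assms Tsp_iff by blast
  have "u \<bullet> u = c * (u \<bullet> pd F 1 q) + d * (u \<bullet> pd F 2 q)"
    by (subst (2) u) (simp add: inner_add_right)
  then show ?thesis using assms by simp
qed

lemma tang_eq:
  assumes "u \<in> Tsp F q" "w \<in> Tsp F q" "\<And>j. u \<bullet> pd F j q = w \<bullet> pd F j q" shows "u = w"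
proof -
  have "u - w \<in> Tsp F q" by (rule subspace_diff[OF Tsp_subspace]) (use assms in auto)
  then have "u - w = 0" by (rule tang_perp_zero) (use assms in \<open>simp add: inner_diff_left\<close>)
  then show ?thesis by simp
qed

lemma tang_expand:
  assumes "reg F q" "u \<in> Tsp F q"
  shows "u = (\<Sum>i\<in>UNIV. (u \<bullet> Fd F q i) *\<^sub>R pd F i q)"
proof (rule tang_eq[OF assms(2)])
  show "(\<Sum>i\<in>UNIV. (u \<bullet> Fd F q i) *\<^sub>R pd F i q) \<in> Tsp F q"
    by (intro subspace_sum[OF Tsp_subspace] subspace_scale[OF Tsp_subspace] pd_in_Tsp)
  fix j
  obtain c d where u: "u = c *\<^sub>R pd F 1 q + d *\<^sub>R pd F 2 q" using assms Tsp_iff by blast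
  have "u \<bullet> Fd F q 1 = c" "u \<bullet> Fd F q 2 = d"
    using Fd_dual4[OF assms(1)] unfolding u by (auto simp: inner_add_left)
  then show "u \<bullet> pd F j q = (\<Sum>i\<in>UNIV. (u \<bullet> Fd F q i) *\<^sub>R pd F i q) \<bullet> pd F j q"
    by (simp add: sum_2 u inner_add_left)
qed

lemma tang_expand2:
  assumes "reg F q" "u \<in> Tsp F q"
  shows "u = (\<Sum>i\<in>UNIV. (u \<bullet> pd F i q) *\<^sub>R Fd F q i)"
proof (rule tang_eq[OF assms(2)])
  show "(\<Sum>i\<in>UNIV. (u \<bullet> pd F i q) *\<^sub>R Fd F q i) \<in> Tsp F q"
    by (intro subspace_sum[OF Tsp_subspace] subspace_scale[OF Tsp_subspace] Fd_in_Tsp)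
  fix j
  show "u \<bullet> pd F j q = (\<Sum>i\<in>UNIV. (u \<bullet> pd F i q) *\<^sub>R Fd F q i) \<bullet> pd F j q"
    using Fd_dual4[OF assms(1)] exhaust_2[of j] by (auto simp: inner_add_left sum_2)
qed

lemma dF_2: "dF F q \<xi> = (\<xi> $ 1) *\<^sub>R pd F 1 q + (\<xi> $ 2) *\<^sub>R pd F 2 q"
  unfolding dF_def sum_2 ..

lemma dF_Fd:
  assumes "reg F q" shows "dF F q \<xi> \<bullet> Fd F q i = \<xi> $ i"
  using Fd_dual4[OF assms] exhaust_2[of i]
  unfolding dF_def by (auto simp: inner_add_left sum_2)

lemma crd_tang:
  assumes "reg F q" "u \<in> Tsp F q"
  shows "crd F q u $ i = u \<bullet> Fd F q i"
proof -
  have ex: "dF F q (\<chi> i. u \<bullet> Fd F q i) = u"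
    using tang_expand[OF assms] by (simp add: dF_def)
  have "crd F q u = (\<chi> i. u \<bullet> Fd F q i)"
    unfolding crd_def
  proof (rule the_equality)
    fix \<xi> assume h: "dF F q \<xi> = u"
    show "\<xi> = (\<chi> i. u \<bullet> Fd F q i)" using dF_Fd[OF assms(1), of \<xi>] unfolding h by (simp add: vec_eq_iff)
  qed (rule ex)
  then show ?thesis by simp
qed

lemma crd_pd:
  assumes "reg F q" shows "crd F q (pd F j q) $ i = (if i = j then 1 else 0)"
  using crd_tang[OF assms pd_in_Tsp] Fd_dual[OF assms] by (simp add: inner_commute)

lemma tproj_eq:
  assumes "reg F q"
  shows "tproj F q y = (\<Sum>i\<in>UNIV. (y \<bullet> pd F i q) *\<^sub>R Fd F q i)"
proof -
  let ?u = "(\<Sum>i\<in>UNIV. (y \<bullet> pd F i q) *\<^sub>R Fd F q i)"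
  have uT: "?u \<in> Tsp F q"
    by (intro subspace_sum[OF Tsp_subspace] subspace_scale[OF Tsp_subspace] Fd_in_Tsp)
  have udot: "?u \<bullet> pd F j q = y \<bullet> pd F j q" for j
    using Fd_dual4[OF assms] exhaust_2[of j] by (auto simp: inner_add_left sum_2)
  have perp: "(y - ?u) \<bullet> w = 0" if wT: "w \<in> Tsp F q" for w
  proof -
    obtain c d where w: "w = c *\<^sub>R pd F 1 q + d *\<^sub>R pd F 2 q" using wT Tsp_iff by blast
    show ?thesis unfolding w using udot by (simp add: inner_add_right inner_diff_left)
  qed
  show ?thesis unfolding tproj_def
  proof (rule the_equality)
    show "?u \<in> Tsp F q \<and> (\<forall>w\<in>Tsp F q. (y - ?u) \<bullet> w = 0)" using uT perp by blast
  next
    fix u' assume h: "u' \<in> Tsp F q \<and> (\<forall>w\<in>Tsp F q. (y - u') \<bullet> w = 0)"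
    show "u' = ?u"
    proof (rule tang_eq)
      show "u' \<in> Tsp F q" "?u \<in> Tsp F q" using h uT by auto
      fix j
      have "(y - u') \<bullet> pd F j q = 0" using h pd_in_Tsp by blast
      then show "u' \<bullet> pd F j q = ?u \<bullet> pd F j q" using udot by (simp add: inner_diff_left)
    qed
  qed
qed

lemma tproj_Tsp: "reg F q \<Longrightarrow> tproj F q y \<in> Tsp F q"
  unfolding tproj_eq by (intro subspace_sum[OF Tsp_subspace] subspace_scale[OF Tsp_subspace] Fd_in_Tsp)

lemma tproj_dot:
  assumes "reg F q" "w \<in> Tsp F q" shows "tproj F q y \<bullet> w = y \<bullet> w"
proof -
  obtain c d where w: "w = c *\<^sub>R pd F 1 q + d *\<^sub>R pd F 2 q" using assms Tsp_iff by blast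
  have "tproj F q y \<bullet> pd F j q = y \<bullet> pd F j q" for j
    using Fd_dual4[OF assms(1)] exhaust_2[of j] by (auto simp: tproj_eq[OF assms(1)] inner_add_left sum_2)
  then show ?thesis unfolding w by (simp add: inner_add_right)
qed

lemma tproj_dot2:
  assumes "reg F q" "w \<in> Tsp F q" shows "w \<bullet> tproj F q y = w \<bullet> y"
  using tproj_dot[OF assms] by (simp add: inner_commute)

lemma tproj_tang: "reg F q \<Longrightarrow> u \<in> Tsp F q \<Longrightarrow> tproj F q u = u"
  by (metis tang_eq tproj_Tsp tproj_dot pd_in_Tsp)



lemma span2_iff: "u \<in> span {a, b} \<longleftrightarrow> (\<exists>c d. u = c *\<^sub>R a + d *\<^sub>R b)"
  unfolding span_insert span_singleton by (auto simp: algebra_simps)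

lemma dim_Tsp: assumes "reg F q" shows "dim (Tsp F q) = 2"
proof -
  have "independent {pd F 1 q, pd F 2 q}" "pd F 1 q \<noteq> pd F 2 q" using assms reg_def by auto
  then show ?thesis unfolding Tsp_def using dim_span_eq_card_independent by fastforce
qed

lemma onframe_expand:
  assumes "reg F q" "onframe F q e" "u \<in> Tsp F q"
  shows "u = (\<Sum>a\<in>UNIV. (u \<bullet> e a) *\<^sub>R e a)"
proof -
  have eT: "e 1 \<in> Tsp F q" "e 2 \<in> Tsp F q" using assms(2) onframe_def by auto
  have o: "e 1 \<bullet> e 1 = 1" "e 2 \<bullet> e 2 = 1" "e 1 \<bullet> e 2 = 0" "e 2 \<bullet> e 1 = 0"
    using assms(2) unfolding onframe_def by auto
  have ne: "e 1 \<noteq> e 2" using o by auto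
  have ind: "independent {e 1, e 2}"
    by (rule pairwise_orthogonal_independent) (use o in \<open>auto simp: pairwise_def orthogonal_def\<close>)
  have "Tsp F q \<subseteq> span {e 1, e 2}"
    by (rule card_ge_dim_independent) (use eT ind ne dim_Tsp[OF assms(1)] in auto)
  then obtain c d where u: "u = c *\<^sub>R e 1 + d *\<^sub>R e 2" using assms(3) span2_iff by blast
  have "u \<bullet> e 1 = c" "u \<bullet> e 2 = d" unfolding u using o by (auto simp: inner_add_left)
  then show ?thesis by (simp add: sum_2 u)
qed

lemma onframe_parseval:
  assumes "reg F q" "onframe F q e" "u \<in> Tsp F q" "w \<in> Tsp F q"
  shows "(\<Sum>a\<in>UNIV. (u \<bullet> e a) * (w \<bullet> e a)) = u \<bullet> w"
proof -
  have "u \<bullet> w = (\<Sum>a\<in>UNIV. (u \<bullet> e a) *\<^sub>R e a) \<bullet> w" using onframe_expand[OF assms(1-3)] by simp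
  also have "\<dots> = (\<Sum>a\<in>UNIV. (u \<bullet> e a) * (e a \<bullet> w))" by (simp only: inner_sum_left inner_scaleR_left)
  also have "\<dots> = (\<Sum>a\<in>UNIV. (u \<bullet> e a) * (w \<bullet> e a))" by (simp add: inner_commute)
  finally show ?thesis by simp
qed

lemma onframe_Tsp: "onframe F q e \<Longrightarrow> e a \<in> Tsp F q" unfolding onframe_def by auto

lemma onframe_trace:
  assumes "reg F q" "onframe F q e"
  shows "(\<Sum>a\<in>UNIV. crd F q (e a) $ i * crd F q (e a) $ j) = gi F q i j"
proof -
  have "(\<Sum>a\<in>UNIV. crd F q (e a) $ i * crd F q (e a) $ j) = (\<Sum>a\<in>UNIV. (Fd F q i \<bullet> e a) * (Fd F q j \<bullet> e a))"
    using crd_tang[OF assms(1) onframe_Tsp[OF assms(2)]] by (simp add: inner_commute)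
  also have "\<dots> = Fd F q i \<bullet> Fd F q j" by (rule onframe_parseval[OF assms Fd_in_Tsp Fd_in_Tsp])
  finally show ?thesis using Fd_Fd[OF assms(1)] by simp
qed

lemma onframe_exists:
  assumes "reg F q" shows "\<exists>e. onframe F q e"
proof -
  let ?a = "pd F 2 q" and ?b = "pd F 1 q"
  have ind: "independent {?a}" and nsp: "?b \<notin> span {?a}"
    using assms unfolding reg_def by (auto simp: independent_insert)
  have a0: "?a \<noteq> 0" using ind by simp
  define e1 where "e1 = (1 / norm ?a) *\<^sub>R ?a"
  have e1: "e1 \<bullet> e1 = 1" using a0 by (simp add: e1_def dot_square_norm power2_eq_square)
  define u where "u = ?b - (?b \<bullet> e1) *\<^sub>R e1"
  have "u \<noteq> 0"
  proof
    assume "u = 0"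
    then have "?b = ((?b \<bullet> e1) / norm ?a) *\<^sub>R ?a" by (simp add: u_def e1_def)
    then have "?b \<in> span {?a}" by (metis span_base span_scale singletonI)
    then show False using nsp by simp
  qed
  define e2 where "e2 = (1 / norm u) *\<^sub>R u"
  have e2: "e2 \<bullet> e2 = 1" using \<open>u \<noteq> 0\<close> by (simp add: e2_def dot_square_norm power2_eq_square)
  have ue1: "u \<bullet> e1 = 0" unfolding u_def using e1 by (simp add: inner_diff_left)
  have e12: "e1 \<bullet> e2 = 0" "e2 \<bullet> e1 = 0" using ue1 by (simp_all add: e2_def inner_commute)
  have T1: "e1 \<in> Tsp F q" unfolding e1_def by (intro subspace_scale[OF Tsp_subspace] pd_in_Tsp)
  have T2: "e2 \<in> Tsp F q" unfolding e2_def u_def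
    by (intro subspace_scale[OF Tsp_subspace] subspace_diff[OF Tsp_subspace] pd_in_Tsp T1)
  define e where "e i = (if i = 1 then e1 else e2)" for i :: 2
  have "onframe F q e" unfolding onframe_def e_def
    using T1 T2 e1 e2 e12 exhaust_2 by auto
  then show ?thesis by blast
qed

lemma efr_onframe: "reg F q \<Longrightarrow> onframe F q (efr F q)"
  unfolding efr_def using onframe_exists by (metis someI_ex)

lemma nproj_frame:
  fixes N :: "nat \<Rightarrow> real^'n"
  assumes r: "reg F q"
    and NT: "\<And>a w. a < CARD('n) - 2 \<Longrightarrow> w \<in> Tsp F q \<Longrightarrow> N a \<bullet> w = 0"
    and NN: "\<And>a b. a < CARD('n) - 2 \<Longrightarrow> b < CARD('n) - 2 \<Longrightarrow> N a \<bullet> N b = (if a = b then 1 else 0)"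
  shows "y - tproj F q y = (\<Sum>a<CARD('n) - 2. (y \<bullet> N a) *\<^sub>R N a)"
proof -
  let ?m = "CARD('n) - 2"
  obtain e where e: "onframe F q e" using onframe_exists[OF r] by blast
  have eT: "e 1 \<in> Tsp F q" "e 2 \<in> Tsp F q" using e onframe_def by auto
  have o: "e 1 \<bullet> e 1 = 1" "e 2 \<bullet> e 2 = 1" "e 1 \<bullet> e 2 = 0" "e 2 \<bullet> e 1 = 0"
    using e unfolding onframe_def by auto
  define B where "B = {e 1, e 2} \<union> N ` {..<?m}"
  have Ne: "N a \<bullet> e i = 0" if "a < ?m" for a i using NT[OF that onframe_Tsp[OF e]] by simp
  have Ne': "e i \<bullet> N a = 0" if "a < ?m" for a i using Ne[OF that] by (simp add: inner_commute)
  have injN: "inj_on N {..<?m}"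
  proof (rule inj_onI)
    fix a b assume "a \<in> {..<?m}" "b \<in> {..<?m}" "N a = N b"
    then have "N a \<bullet> N b = 1" using NN[of a a] by auto
    then show "a = b" using NN[of a b] \<open>a \<in> {..<?m}\<close> \<open>b \<in> {..<?m}\<close> by (auto split: if_splits)
  qed
  have disj: "{e 1, e 2} \<inter> N ` {..<?m} = {}"
  proof -
    have "e i \<noteq> N a" if "a < ?m" for a i
    proof
      assume "e i = N a"
      then have "N a \<bullet> N a = 0" using Ne[OF that, of i] by simp
      then show False using NN[OF that that] by simp
    qed
    then show ?thesis by auto
  qed
  have ne: "e 1 \<noteq> e 2" using o by auto
  have indB: "independent B"
  proof (rule pairwise_orthogonal_independent)
    show "pairwise orthogonal B" unfolding pairwise_def orthogonal_def B_def
      using o Ne Ne' NN injN by (auto simp: inj_on_def)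
    show "0 \<notin> B" unfolding B_def using o NN by (auto) (metis NN inner_zero_left zero_neq_one)
  qed
  have ind2: "independent {e 1, e 2}" using indB B_def independent_mono by blast
  have "card {e 1, e 2} \<le> dim (UNIV :: (real^'n) set)"
    by (rule independent_card_le_dim) (use ind2 in auto)
  then have c2: "2 \<le> CARD('n)" using ne by simp
  have "card B = 2 + ?m" unfolding B_def
    by (subst card_Un_disjoint) (use disj ne card_image[OF injN] in auto)
  then have cB: "card B = CARD('n)" using c2 by simp
  have "UNIV \<subseteq> span B"
    by (rule card_ge_dim_independent) (use indB cB in auto)
  define z where "z = y - tproj F q y - (\<Sum>a<?m. (y \<bullet> N a) *\<^sub>R N a)"
  have zB: "orthogonal z x" if "x \<in> B" for x
  proof -
    have ye: "(y - tproj F q y) \<bullet> e i = 0" for i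
      using tproj_dot[OF r eT(1)] tproj_dot[OF r eT(2)] exhaust_2[of i] by (auto simp: inner_diff_left)
    have ze: "z \<bullet> e i = 0" for i
      unfolding z_def using ye by (simp add: inner_diff_left inner_sum_left Ne)
    have zN: "z \<bullet> N b = 0" if "b < ?m" for b
    proof -
      have "tproj F q y \<bullet> N b = 0" using NT[OF that tproj_Tsp[OF r]] by (simp add: inner_commute)
      moreover have "(\<Sum>a<?m. (y \<bullet> N a) *\<^sub>R N a) \<bullet> N b = y \<bullet> N b"
        using that by (simp add: inner_sum_left NN if_distrib cong: if_cong)
      ultimately show ?thesis unfolding z_def by (simp add: inner_diff_left)
    qed
    show ?thesis using that ze zN unfolding B_def orthogonal_def by auto
  qed
  have "orthogonal z z" by (rule orthogonal_to_span[of z B]) (use \<open>UNIV \<subseteq> span B\<close> zB in auto)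
  then have "z = 0" by (simp add: orthogonal_def)
  then show ?thesis by (simp add: z_def)
qed



lemma core_trace:
  fixes G S dG dS :: "2 \<Rightarrow> 2 \<Rightarrow> real" and WF D E dD :: real and Gi :: "2 \<Rightarrow> 2 \<Rightarrow> real"
  assumes D: "D = G 1 1 * G 2 2 - G 1 2 * G 1 2" "D \<noteq> 0"
    and Gi: "Gi 1 1 = G 2 2 / D" "Gi 2 2 = G 1 1 / D" "Gi 1 2 = - G 1 2 / D" "Gi 2 1 = - G 1 2 / D"
    and Ssym: "S 2 1 = S 1 2" and dGsym: "dG 2 1 = dG 1 2"
    and dD: "dD = dG 1 1 * G 2 2 + G 1 1 * dG 2 2 - 2 * G 1 2 * dG 1 2"
    and c2: "G 2 2 * S 1 1 - G 1 2 * (S 1 2 + S 2 1) + G 1 1 * S 2 2 = D * WF / 2"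
    and c3: "dG 2 2 * S 1 1 + G 2 2 * dS 1 1 - (dG 1 2 * (S 1 2 + S 2 1) + G 1 2 * (dS 1 2 + dS 2 1))
        + dG 1 1 * S 2 2 + G 1 1 * dS 2 2 = dD * WF / 2 + D * E / 2"
  shows "(\<Sum>i\<in>UNIV. \<Sum>j\<in>UNIV. Gi i j * dS i j)
       = E / 2 + (\<Sum>i\<in>UNIV. \<Sum>j\<in>UNIV. \<Sum>a\<in>UNIV. \<Sum>b\<in>UNIV. Gi i a * dG a b * Gi b j * S i j)"
proof -
  define A :: "2 \<Rightarrow> 2 \<Rightarrow> real" where "A i j = Gi i j * D" for i j
  have A: "A 1 1 = G 2 2" "A 2 2 = G 1 1" "A 1 2 = - G 1 2" "A 2 1 = - G 1 2"
    unfolding A_def Gi using D(2) by simp_all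
  have GiA: "Gi i j = A i j / D" for i j unfolding A_def using D(2) by simp
  define N1 where "N1 = G 2 2 * dS 1 1 - G 1 2 * (dS 1 2 + dS 2 1) + G 1 1 * dS 2 2"
  define T where "T = G 2 2 * S 1 1 - G 1 2 * (S 1 2 + S 2 1) + G 1 1 * S 2 2"
  define M where "M = dG 2 2 * S 1 1 - dG 1 2 * (S 1 2 + S 2 1) + dG 1 1 * S 2 2"
  define N2 where "N2 = (\<Sum>i\<in>UNIV. \<Sum>j\<in>UNIV. \<Sum>a\<in>UNIV. \<Sum>b\<in>UNIV. A i a * dG a b * A b j * S i j)"
  have e: "N1 = dD * WF / 2 + D * E / 2 - M" unfolding N1_def M_def using c3 by linarith
  have WF: "D * WF = 2 * T" unfolding T_def using c2 by (simp add: field_simps)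
  have L: "(\<Sum>i\<in>UNIV. \<Sum>j\<in>UNIV. Gi i j * dS i j) = N1 / D"
    unfolding sum_2 GiA A N1_def by (simp add: add_divide_distrib diff_divide_distrib algebra_simps)
  have R: "(\<Sum>i\<in>UNIV. \<Sum>j\<in>UNIV. \<Sum>a\<in>UNIV. \<Sum>b\<in>UNIV. Gi i a * dG a b * Gi b j * S i j) = N2 / (D * D)"
    unfolding GiA N2_def by (simp add: sum_divide_distrib)
  have P: "dD * T - D * M = N2"
    unfolding N2_def sum_2 A dD T_def M_def D(1) Ssym dGsym by (simp add: algebra_simps)
  have "D * N1 = D * D * E / 2 + N2"
  proof -
    have "D * N1 = dD * (D * WF) / 2 + D * D * E / 2 - D * M" unfolding e by (simp add: algebra_simps)
    also have "\<dots> = D * D * E / 2 + (dD * T - D * M)" unfolding WF by (simp add: algebra_simps)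
    finally show ?thesis unfolding P .
  qed
  then have "N1 / D = E / 2 + N2 / (D * D)" using D(2) by (simp add: field_simps)
  then show ?thesis unfolding L R .
qed

lemma core_main:
  fixes Gi S :: "2 \<Rightarrow> 2 \<Rightarrow> real" and Wt C B BN :: "2 \<Rightarrow> 2 \<Rightarrow> 2 \<Rightarrow> real"
    and xb xN w Wx :: "2 \<Rightarrow> real"
  assumes Gisym: "Gi 2 1 = Gi 1 2" and Ssym: "S 2 1 = S 1 2"
    and Wsym: "\<And>a b c. Wt a b c = Wt b a c" and Csym: "\<And>a b c. C a b c = C b a c"
    and hB: "\<And>j i k. B j i k = (\<Sum>a\<in>UNIV. C i k a * (\<Sum>b\<in>UNIV. Gi a b * S j b)) + BN j i k"
    and c1: "\<And>i j k. Wt i j k + B j i k = Wt i k j + B k i j"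
    and tr: "(\<Sum>i\<in>UNIV. \<Sum>j\<in>UNIV. Gi i j * (Wt k i j + B i k j)) = (Wx k + w k) / 2
        + (\<Sum>i\<in>UNIV. \<Sum>j\<in>UNIV. \<Sum>a\<in>UNIV. \<Sum>b\<in>UNIV. Gi i a * (C k a b + C k b a) * Gi b j * S i j)"
    and hx: "Wx k = (\<Sum>a\<in>UNIV. xb a * (\<Sum>b\<in>UNIV. Gi a b * S k b)) + xN k"
  shows "(\<Sum>i\<in>UNIV. \<Sum>j\<in>UNIV. Gi i j * (Wt i j k
            - (\<Sum>a\<in>UNIV. (\<Sum>b\<in>UNIV. Gi a b * C i j b) * S a k)
            - (\<Sum>a\<in>UNIV. (\<Sum>b\<in>UNIV. Gi a b * C i k b) * S j a) + B j i k))
         - (1/2) * (\<Sum>i\<in>UNIV. (\<Sum>b\<in>UNIV. Gi i b * xb b) * S i k)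
       = w k / 2 + xN k / 2 + (\<Sum>i\<in>UNIV. \<Sum>j\<in>UNIV. Gi i j * (BN k i j - BN i k j))"
proof -
  have m: "Gi i j * Wt i j k = Gi i j * Wt k i j + Gi i j * (B k i j - B j i k)" for i j
  proof -
    have "Wt i j k = Wt k i j + B k i j - B j i k" using c1[of i j k] Wsym[of i k j] by linarith
    then show ?thesis by (metis (no_types) add_diff_eq distrib_left)
  qed
  have s1: "(\<Sum>i\<in>UNIV. \<Sum>j\<in>UNIV. Gi i j * Wt i j k) = (\<Sum>i\<in>UNIV. \<Sum>j\<in>UNIV. Gi i j * Wt k i j)
      + (\<Sum>i\<in>UNIV. \<Sum>j\<in>UNIV. Gi i j * (B k i j - B j i k))"
    unfolding m by (simp add: sum.distrib)
  have tr': "(\<Sum>i\<in>UNIV. \<Sum>j\<in>UNIV. Gi i j * Wt k i j) = (Wx k + w k) / 2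
        + (\<Sum>i\<in>UNIV. \<Sum>j\<in>UNIV. \<Sum>a\<in>UNIV. \<Sum>b\<in>UNIV. Gi i a * (C k a b + C k b a) * Gi b j * S i j)
        - (\<Sum>i\<in>UNIV. \<Sum>j\<in>UNIV. Gi i j * B i k j)"
    using tr by (simp add: algebra_simps sum.distrib)
  have k: "k = 1 \<or> k = 2" by (rule exhaust_2)
  have LHS: "(\<Sum>i\<in>UNIV. \<Sum>j\<in>UNIV. Gi i j * (Wt i j k
            - (\<Sum>a\<in>UNIV. (\<Sum>b\<in>UNIV. Gi a b * C i j b) * S a k)
            - (\<Sum>a\<in>UNIV. (\<Sum>b\<in>UNIV. Gi a b * C i k b) * S j a) + B j i k))
       = (\<Sum>i\<in>UNIV. \<Sum>j\<in>UNIV. Gi i j * Wt i j k)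
         - (\<Sum>i\<in>UNIV. \<Sum>j\<in>UNIV. Gi i j * (\<Sum>a\<in>UNIV. (\<Sum>b\<in>UNIV. Gi a b * C i j b) * S a k))
         - (\<Sum>i\<in>UNIV. \<Sum>j\<in>UNIV. Gi i j * (\<Sum>a\<in>UNIV. (\<Sum>b\<in>UNIV. Gi a b * C i k b) * S j a))
         + (\<Sum>i\<in>UNIV. \<Sum>j\<in>UNIV. Gi i j * B j i k)"
    by (simp add: algebra_simps sum.distrib sum_subtractf)
  have rest: "(\<Sum>i\<in>UNIV. \<Sum>j\<in>UNIV. Gi i j * (B k i j - B j i k))
        + (\<Sum>i\<in>UNIV. \<Sum>j\<in>UNIV. \<Sum>a\<in>UNIV. \<Sum>b\<in>UNIV. Gi i a * (C k a b + C k b a) * Gi b j * S i j)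
        - (\<Sum>i\<in>UNIV. \<Sum>j\<in>UNIV. Gi i j * B i k j)
        - (\<Sum>i\<in>UNIV. \<Sum>j\<in>UNIV. Gi i j * (\<Sum>a\<in>UNIV. (\<Sum>b\<in>UNIV. Gi a b * C i j b) * S a k))
        - (\<Sum>i\<in>UNIV. \<Sum>j\<in>UNIV. Gi i j * (\<Sum>a\<in>UNIV. (\<Sum>b\<in>UNIV. Gi a b * C i k b) * S j a))
        + (\<Sum>i\<in>UNIV. \<Sum>j\<in>UNIV. Gi i j * B j i k)
        + Wx k / 2 - (1/2) * (\<Sum>i\<in>UNIV. (\<Sum>b\<in>UNIV. Gi i b * xb b) * S i k)
      = xN k / 2 + (\<Sum>i\<in>UNIV. \<Sum>j\<in>UNIV. Gi i j * (BN k i j - BN i k j))"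
    using k
  proof
    assume k1: "k = 1"
    show ?thesis using hx unfolding k1 hB sum_2 Gisym Ssym Csym[of 2 1]
      by (simp add: algebra_simps)
  next
    assume k1: "k = 2"
    show ?thesis using hx unfolding k1 hB sum_2 Gisym Ssym Csym[of 2 1]
      by (simp add: algebra_simps)
  qed
  show ?thesis using LHS s1 tr' rest by argo
qed



lemma imm_reg: "immersion U F \<Longrightarrow> q \<in> U \<Longrightarrow> reg F q"
  unfolding immersion_def reg_def by auto

lemma imm_open: "immersion U F \<Longrightarrow> open U" unfolding immersion_def by auto
lemma imm_smooth: "immersion U F \<Longrightarrow> smooth_on2 U F" unfolding immersion_def by auto

lemma sdiff1: "smooth_on2 U f \<Longrightarrow> open U \<Longrightarrow> q \<in> U \<Longrightarrow> pd f i differentiable (at q)"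
  using smooth_diff smooth_pd by blast
lemma sdiff2: "smooth_on2 U f \<Longrightarrow> open U \<Longrightarrow> q \<in> U \<Longrightarrow> pd (pd f i) j differentiable (at q)"
  using smooth_diff smooth_pd by blast

lemma nab1_S:
  assumes imm: "immersion U F" and sW: "smooth_on2 U W" and WT: "\<forall>q\<in>U. W q \<in> Tsp F q"
    and om: "\<forall>q\<in>U. \<forall>u\<in>Tsp F q. om q u = W q \<bullet> u" and q: "q \<in> U"
  shows "nab1 F om q u w = (\<Sum>i\<in>UNIV. \<Sum>j\<in>UNIV. crd F q u $ i * crd F q w $ j * (pd W i q \<bullet> pd F j q))"
proof -
  have U: "open U" using imm imm_open by blast
  have sF: "smooth_on2 U F" using imm imm_smooth by blast
  have r: "reg F q" using imm q imm_reg by blast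
  have e: "pd (\<lambda>r. om r (pd F j r)) i q - om q (chr F q i j) = pd W i q \<bullet> pd F j q" for i j
  proof -
    have "pd (\<lambda>r. om r (pd F j r)) i q = pd (\<lambda>r. W r \<bullet> pd F j r) i q"
      by (rule pd_local[OF U q]) (use om pd_in_Tsp in blast)
    also have "\<dots> = pd W i q \<bullet> pd F j q + W q \<bullet> pd (pd F j) i q"
      by (rule pd_inner) (use smooth_diff[OF sW U q] sdiff1[OF sF U q] in auto)
    finally have 1: "pd (\<lambda>r. om r (pd F j r)) i q = pd W i q \<bullet> pd F j q + W q \<bullet> pd (pd F j) i q" .
    have "om q (chr F q i j) = W q \<bullet> tproj F q (pd (pd F j) i q)"
      unfolding chr_def using om q tproj_Tsp[OF r] by blast
    also have "\<dots> = W q \<bullet> pd (pd F j) i q" using tproj_dot2[OF r] WT q by blast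
    finally show ?thesis using 1 by simp
  qed
  show ?thesis unfolding nab1_def e ..
qed

lemma nab1_pd:
  assumes imm: "immersion U F" and sW: "smooth_on2 U W" and WT: "\<forall>q\<in>U. W q \<in> Tsp F q"
    and om: "\<forall>q\<in>U. \<forall>u\<in>Tsp F q. om q u = W q \<bullet> u" and q: "q \<in> U"
  shows "nab1 F om q (pd F j q) (pd F k q) = pd W j q \<bullet> pd F k q"
proof -
  have r: "reg F q" using imm q imm_reg by blast
  show ?thesis unfolding nab1_S[OF assms] crd_pd[OF r]
    using exhaust_2[of j] exhaust_2[of k] by (auto simp: sum_2)
qed

definition Sf :: "(real^2 \<Rightarrow> real^'n) \<Rightarrow> (real^2 \<Rightarrow> real^'n) \<Rightarrow> real^2 \<Rightarrow> 2 \<Rightarrow> 2 \<Rightarrow> real" where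
  "Sf W F q i j = pd W i q \<bullet> pd F j q"
definition Wtf :: "(real^2 \<Rightarrow> real^'n) \<Rightarrow> (real^2 \<Rightarrow> real^'n) \<Rightarrow> real^2 \<Rightarrow> 2 \<Rightarrow> 2 \<Rightarrow> 2 \<Rightarrow> real" where
  "Wtf W F p i j k = pd (pd W j) i p \<bullet> pd F k p"
definition Cf :: "(real^2 \<Rightarrow> real^'n) \<Rightarrow> real^2 \<Rightarrow> 2 \<Rightarrow> 2 \<Rightarrow> 2 \<Rightarrow> real" where
  "Cf F p i j b = pd (pd F j) i p \<bullet> pd F b p"
definition Bf :: "(real^2 \<Rightarrow> real^'n) \<Rightarrow> (real^2 \<Rightarrow> real^'n) \<Rightarrow> real^2 \<Rightarrow> 2 \<Rightarrow> 2 \<Rightarrow> 2 \<Rightarrow> real" where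
  "Bf W F p j i k = pd W j p \<bullet> pd (pd F k) i p"

lemma crd_chr:
  assumes r: "reg F p"
  shows "crd F p (chr F p i j) $ a = (\<Sum>b\<in>UNIV. gi F p a b * Cf F p i j b)"
proof -
  have "crd F p (chr F p i j) $ a = chr F p i j \<bullet> Fd F p a"
    unfolding chr_def by (rule crd_tang[OF r tproj_Tsp[OF r]])
  also have "\<dots> = pd (pd F j) i p \<bullet> Fd F p a" unfolding chr_def by (rule tproj_dot[OF r Fd_in_Tsp])
  also have "\<dots> = (\<Sum>b\<in>UNIV. gi F p a b * Cf F p i j b)"
    unfolding Fd_def Cf_def by (simp add: inner_sum_right)
  finally show ?thesis .
qed

lemma Lop_expand:
  assumes imm: "immersion U F" and sW: "smooth_on2 U W" and WT: "\<forall>q\<in>U. W q \<in> Tsp F q"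
    and om: "\<forall>q\<in>U. \<forall>u\<in>Tsp F q. om q u = W q \<bullet> u" and p: "p \<in> U"
  shows "Lop F om p v = (\<Sum>k\<in>UNIV. crd F p v $ k * (
     (\<Sum>i\<in>UNIV. \<Sum>j\<in>UNIV. gi F p i j * (Wtf W F p i j k
            - (\<Sum>a\<in>UNIV. (\<Sum>b\<in>UNIV. gi F p a b * Cf F p i j b) * Sf W F p a k)
            - (\<Sum>a\<in>UNIV. (\<Sum>b\<in>UNIV. gi F p a b * Cf F p i k b) * Sf W F p j a) + Bf W F p j i k))
         - (1/2) * (\<Sum>i\<in>UNIV. (\<Sum>b\<in>UNIV. gi F p i b * (F p \<bullet> pd F b p)) * Sf W F p i k)))"
proof -
  have U: "open U" using imm imm_open by blast
  have sF: "smooth_on2 U F" using imm imm_smooth by blast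
  have r: "reg F p" using imm p imm_reg by blast
  define Q where "Q i j k = Wtf W F p i j k
            - (\<Sum>a\<in>UNIV. (\<Sum>b\<in>UNIV. gi F p a b * Cf F p i j b) * Sf W F p a k)
            - (\<Sum>a\<in>UNIV. (\<Sum>b\<in>UNIV. gi F p a b * Cf F p i k b) * Sf W F p j a) + Bf W F p j i k" for i j k
  have N1: "nab1 F om p u w = (\<Sum>i\<in>UNIV. \<Sum>j\<in>UNIV. crd F p u $ i * crd F p w $ j * Sf W F p i j)" for u w
    unfolding Sf_def by (rule nab1_S[OF imm sW WT om p])
  have Qe: "pd (\<lambda>q. nab1 F om q (pd F j q) (pd F k q)) i p - nab1 F om p (chr F p i j) (pd F k p)
        - nab1 F om p (pd F j p) (chr F p i k) = Q i j k" for i j k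
  proof -
    have "pd (\<lambda>q. nab1 F om q (pd F j q) (pd F k q)) i p = pd (\<lambda>q. pd W j q \<bullet> pd F k q) i p"
      by (rule pd_local[OF U p]) (rule nab1_pd[OF imm sW WT om])
    also have "\<dots> = Wtf W F p i j k + Bf W F p j i k"
      unfolding Wtf_def Bf_def
      by (rule pd_inner) (use sdiff1[OF sW U p] sdiff1[OF sF U p] in auto)
    finally have 1: "pd (\<lambda>q. nab1 F om q (pd F j q) (pd F k q)) i p = Wtf W F p i j k + Bf W F p j i k" .
    have 2: "nab1 F om p (chr F p i j) (pd F k p) = (\<Sum>a\<in>UNIV. (\<Sum>b\<in>UNIV. gi F p a b * Cf F p i j b) * Sf W F p a k)"
      unfolding N1 crd_pd[OF r] crd_chr[OF r] using exhaust_2[of k] by (auto simp: sum_2)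
    have 3: "nab1 F om p (pd F j p) (chr F p i k) = (\<Sum>a\<in>UNIV. (\<Sum>b\<in>UNIV. gi F p a b * Cf F p i k b) * Sf W F p j a)"
      unfolding N1 crd_pd[OF r] crd_chr[OF r] using exhaust_2[of j] by (auto simp: sum_2)
    show ?thesis unfolding 1 2 3 Q_def by simp
  qed
  have N2: "nab2 F (nab1 F om) p u u v = (\<Sum>i\<in>UNIV. \<Sum>j\<in>UNIV. \<Sum>k\<in>UNIV. crd F p u $ i * crd F p u $ j * crd F p v $ k * Q i j k)" for u
    unfolding nab2_def using Qe by (simp add: algebra_simps)
  define e where "e = efr F p"
  have e: "onframe F p e" unfolding e_def by (rule efr_onframe[OF r])
  have tr: "(\<Sum>a\<in>UNIV. crd F p (e a) $ i * crd F p (e a) $ j) = gi F p i j" for i j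
    by (rule onframe_trace[OF r e])
  have X: "crd F p (tproj F p (F p)) $ i = (\<Sum>b\<in>UNIV. gi F p i b * (F p \<bullet> pd F b p))" for i
  proof -
    have "crd F p (tproj F p (F p)) $ i = tproj F p (F p) \<bullet> Fd F p i" by (rule crd_tang[OF r tproj_Tsp[OF r]])
    also have "\<dots> = F p \<bullet> Fd F p i" by (rule tproj_dot[OF r Fd_in_Tsp])
    finally show ?thesis unfolding Fd_def by (simp add: inner_sum_right)
  qed
  have "Lop F om p v = (\<Sum>a\<in>UNIV. \<Sum>i\<in>UNIV. \<Sum>j\<in>UNIV. \<Sum>k\<in>UNIV. crd F p (e a) $ i * crd F p (e a) $ j * crd F p v $ k * Q i j k)
      - (1/2) * (\<Sum>i\<in>UNIV. \<Sum>k\<in>UNIV. crd F p (tproj F p (F p)) $ i * crd F p v $ k * Sf W F p i k)"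
    unfolding Lop_def N2 N1 e_def ..
  also have "\<dots> = (\<Sum>k\<in>UNIV. crd F p v $ k * ((\<Sum>i\<in>UNIV. \<Sum>j\<in>UNIV. gi F p i j * Q i j k)
         - (1/2) * (\<Sum>i\<in>UNIV. crd F p (tproj F p (F p)) $ i * Sf W F p i k)))"
    unfolding tr[symmetric] sum_2 by (simp add: algebra_simps)
  finally show ?thesis unfolding X Q_def .
qed



lemma trace_on_U:
  assumes imm: "immersion U F" and sW: "smooth_on2 U W" and WT: "\<forall>q\<in>U. W q \<in> Tsp F q"
    and om: "\<forall>q\<in>U. \<forall>u\<in>Tsp F q. om q u = W q \<bullet> u" and G: "GHF U F om" and q: "q \<in> U"
  shows "(\<Sum>i\<in>UNIV. \<Sum>j\<in>UNIV. gi F q i j * Sf W F q i j) = (W q \<bullet> F q) / 2"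
proof -
  have r: "reg F q" using imm q imm_reg by blast
  have e: "onframe F q (efr F q)" by (rule efr_onframe[OF r])
  have "trT F q (nab1 F om q) = (\<Sum>i\<in>UNIV. \<Sum>j\<in>UNIV. gi F q i j * Sf W F q i j)"
    unfolding trT_def nab1_S[OF imm sW WT om q] Sf_def[symmetric] onframe_trace[OF r e, symmetric] sum_2
    by (simp add: algebra_simps)
  moreover have "om q (tproj F q (F q)) = W q \<bullet> F q"
    using om q tproj_Tsp[OF r] tproj_dot2[OF r] WT by auto
  ultimately show ?thesis using G q unfolding GHF_def by auto
qed

lemma sym_on_U:
  assumes imm: "immersion U F" and sW: "smooth_on2 U W" and WT: "\<forall>q\<in>U. W q \<in> Tsp F q"
    and om: "\<forall>q\<in>U. \<forall>u\<in>Tsp F q. om q u = W q \<bullet> u" and G: "GHF U F om" and q: "q \<in> U"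
  shows "Sf W F q i j = Sf W F q j i"
  using G q nab1_pd[OF imm sW WT om q] pd_in_Tsp unfolding GHF_def Sf_def by metis

lemma P_zero:
  assumes imm: "immersion U F" and sW: "smooth_on2 U W" and WT: "\<forall>q\<in>U. W q \<in> Tsp F q"
    and om: "\<forall>q\<in>U. \<forall>u\<in>Tsp F q. om q u = W q \<bullet> u" and G: "GHF U F om" and q: "q \<in> U"
  shows "gm F q 2 2 * Sf W F q 1 1 - gm F q 1 2 * (Sf W F q 1 2 + Sf W F q 2 1) + gm F q 1 1 * Sf W F q 2 2
      - (1/2) * (gdet F q * (W q \<bullet> F q)) = 0"
proof -
  have r: "reg F q" using imm q imm_reg by blast
  have d: "gdet F q \<noteq> 0" using gdet_pos[OF r] by simp
  have "(gm F q 2 2 * Sf W F q 1 1 - gm F q 1 2 * (Sf W F q 1 2 + Sf W F q 2 1) + gm F q 1 1 * Sf W F q 2 2) / gdet F q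
     = (\<Sum>i\<in>UNIV. \<Sum>j\<in>UNIV. gi F q i j * Sf W F q i j)"
    unfolding sum_2 gi_def by (simp add: add_divide_distrib diff_divide_distrib algebra_simps)
  also have "\<dots> = (W q \<bullet> F q) / 2" by (rule trace_on_U[OF assms])
  finally show ?thesis using d by (simp add: field_simps)
qed

lemma pd_divc:
  fixes f :: "real^2 \<Rightarrow> real"
  assumes "f differentiable (at p)"
  shows "pd (\<lambda>q. f q / c) i p = pd f i p / c"
  using pd_mult[OF assms differentiable_const[of "1 / c"], of i] by (simp add: pd_const divide_inverse)

lemma pd_gm:
  assumes sF: "smooth_on2 U F" and U: "open U" and p: "p \<in> U"
  shows "pd (\<lambda>q. gm F q a b) k p = Cf F p k a b + Cf F p k b a"
  unfolding gm_def Cf_def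
  by (subst pd_inner) (use sdiff1[OF sF U p] in \<open>auto simp: inner_commute\<close>)

lemma pd_Sf:
  assumes sF: "smooth_on2 U F" and sW: "smooth_on2 U W" and U: "open U" and p: "p \<in> U"
  shows "pd (\<lambda>q. Sf W F q i j) k p = Wtf W F p k i j + Bf W F p i k j"
  unfolding Sf_def Wtf_def Bf_def
  by (subst pd_inner) (use sdiff1[OF sF U p] sdiff1[OF sW U p] in auto)

lemma pd_WF:
  assumes sF: "smooth_on2 U F" and sW: "smooth_on2 U W" and U: "open U" and p: "p \<in> U"
  shows "pd (\<lambda>q. W q \<bullet> F q) k p = pd W k p \<bullet> F p + W p \<bullet> pd F k p"
  by (rule pd_inner) (use smooth_diff[OF sF U p] smooth_diff[OF sW U p] in auto)

lemma diff_gm: "smooth_on2 U F \<Longrightarrow> open U \<Longrightarrow> p \<in> U \<Longrightarrow> (\<lambda>q. gm F q a b) differentiable (at p)"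
  unfolding gm_def by (intro differentiable_inner sdiff1)
lemma diff_Sf: "smooth_on2 U F \<Longrightarrow> smooth_on2 U W \<Longrightarrow> open U \<Longrightarrow> p \<in> U \<Longrightarrow> (\<lambda>q. Sf W F q a b) differentiable (at p)"
  unfolding Sf_def by (intro differentiable_inner sdiff1)
lemma diff_WF: "smooth_on2 U F \<Longrightarrow> smooth_on2 U W \<Longrightarrow> open U \<Longrightarrow> p \<in> U \<Longrightarrow> (\<lambda>q. W q \<bullet> F q) differentiable (at p)"
  by (intro differentiable_inner smooth_diff)

lemma c3_at:
  fixes k :: 2
  assumes imm: "immersion U F" and sW: "smooth_on2 U W" and WT: "\<forall>q\<in>U. W q \<in> Tsp F q"
    and om: "\<forall>q\<in>U. \<forall>u\<in>Tsp F q. om q u = W q \<bullet> u" and G: "GHF U F om" and p: "p \<in> U"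
  defines "dG \<equiv> \<lambda>a b. Cf F p k a b + Cf F p k b a"
    and "dS \<equiv> \<lambda>i j. Wtf W F p k i j + Bf W F p i k j"
    and "S \<equiv> Sf W F p" and "Gm \<equiv> gm F p"
  shows "dG 2 2 * S 1 1 + Gm 2 2 * dS 1 1 - (dG 1 2 * (S 1 2 + S 2 1) + Gm 1 2 * (dS 1 2 + dS 2 1))
        + dG 1 1 * S 2 2 + Gm 1 1 * dS 2 2
      = (dG 1 1 * Gm 2 2 + Gm 1 1 * dG 2 2 - 2 * Gm 1 2 * dG 1 2) * (W p \<bullet> F p) / 2
        + gdet F p * (pd W k p \<bullet> F p + W p \<bullet> pd F k p) / 2"
proof -
  have U: "open U" using imm imm_open by blast
  have sF: "smooth_on2 U F" using imm imm_smooth by blast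
  note dg = diff_gm[OF sF U p] and ds = diff_Sf[OF sF sW U p] and dw = diff_WF[OF sF sW U p]
  note pg = pd_gm[OF sF U p] and ps = pd_Sf[OF sF sW U p] and pw = pd_WF[OF sF sW U p]
  have "pd (\<lambda>q. gm F q 2 2 * Sf W F q 1 1 - gm F q 1 2 * (Sf W F q 1 2 + Sf W F q 2 1) + gm F q 1 1 * Sf W F q 2 2
      - (1/2) * ((gm F q 1 1 * gm F q 2 2 - gm F q 1 2 * gm F q 1 2) * (W q \<bullet> F q))) k p = 0"
  proof (rule pd_zero_on[OF U p])
    fix q assume "q \<in> U"
    from P_zero[OF imm sW WT om G this] show "gm F q 2 2 * Sf W F q 1 1 - gm F q 1 2 * (Sf W F q 1 2 + Sf W F q 2 1) + gm F q 1 1 * Sf W F q 2 2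
      - (1/2) * ((gm F q 1 1 * gm F q 2 2 - gm F q 1 2 * gm F q 1 2) * (W q \<bullet> F q)) = 0"
      by (simp add: gdet_def power2_eq_square)
  qed
  then have "0 = pd (\<lambda>q. gm F q 2 2) k p * Sf W F p 1 1 + gm F p 2 2 * pd (\<lambda>q. Sf W F q 1 1) k p
      - (pd (\<lambda>q. gm F q 1 2) k p * (Sf W F p 1 2 + Sf W F p 2 1) + gm F p 1 2 * (pd (\<lambda>q. Sf W F q 1 2) k p + pd (\<lambda>q. Sf W F q 2 1) k p))
      + (pd (\<lambda>q. gm F q 1 1) k p * Sf W F p 2 2 + gm F p 1 1 * pd (\<lambda>q. Sf W F q 2 2) k p)
      - (1/2) * ((pd (\<lambda>q. gm F q 1 1) k p * gm F p 2 2 + gm F p 1 1 * pd (\<lambda>q. gm F q 2 2) k p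
             - (pd (\<lambda>q. gm F q 1 2) k p * gm F p 1 2 + gm F p 1 2 * pd (\<lambda>q. gm F q 1 2) k p)) * (W p \<bullet> F p)
           + (gm F p 1 1 * gm F p 2 2 - gm F p 1 2 * gm F p 1 2) * pd (\<lambda>q. W q \<bullet> F q) k p)"
    by (simp add: pd_add pd_diff pd_mult pd_const pd_divc dg ds dw)
  then show ?thesis unfolding pg ps pw dG_def dS_def S_def Gm_def gdet_def power2_eq_square
    by (simp add: field_simps)
qed



lemma c1_at:
  assumes imm: "immersion U F" and sW: "smooth_on2 U W" and WT: "\<forall>q\<in>U. W q \<in> Tsp F q"
    and om: "\<forall>q\<in>U. \<forall>u\<in>Tsp F q. om q u = W q \<bullet> u" and G: "GHF U F om" and p: "p \<in> U"
  shows "Wtf W F p i j k + Bf W F p j i k = Wtf W F p i k j + Bf W F p k i j"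
proof -
  have U: "open U" using imm imm_open by blast
  have sF: "smooth_on2 U F" using imm imm_smooth by blast
  have "pd (\<lambda>q. Sf W F q j k - Sf W F q k j) i p = 0"
    by (rule pd_zero_on[OF U p]) (use sym_on_U[OF imm sW WT om G] in auto)
  then show ?thesis
    using pd_diff[OF diff_Sf[OF sF sW U p] diff_Sf[OF sF sW U p], of j k k j i] pd_Sf[OF sF sW U p] by simp
qed

lemma hB_at:
  assumes r: "reg F p"
  shows "Bf W F p j i k = (\<Sum>a\<in>UNIV. Cf F p i k a * (\<Sum>b\<in>UNIV. gi F p a b * Sf W F p j b))
     + pd W j p \<bullet> (pd (pd F k) i p - tproj F p (pd (pd F k) i p))"
proof -
  have "pd W j p \<bullet> tproj F p (pd (pd F k) i p) = (\<Sum>a\<in>UNIV. Cf F p i k a * (\<Sum>b\<in>UNIV. gi F p a b * Sf W F p j b))"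
    unfolding tproj_eq[OF r] Fd_def Cf_def Sf_def
    by (simp add: inner_sum_right sum_distrib_left mult.commute)
  then show ?thesis unfolding Bf_def by (simp add: inner_diff_right)
qed

lemma hx_at:
  assumes r: "reg F p"
  shows "pd W k p \<bullet> F p = (\<Sum>a\<in>UNIV. (F p \<bullet> pd F a p) * (\<Sum>b\<in>UNIV. gi F p a b * Sf W F p k b))
     + pd W k p \<bullet> (F p - tproj F p (F p))"
proof -
  have "pd W k p \<bullet> tproj F p (F p) = (\<Sum>a\<in>UNIV. (F p \<bullet> pd F a p) * (\<Sum>b\<in>UNIV. gi F p a b * Sf W F p k b))"
    unfolding tproj_eq[OF r] Fd_def Sf_def
    by (simp add: inner_sum_right sum_distrib_left mult.commute)
  then show ?thesis by (simp add: inner_diff_right)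
qed

lemma part1_core:
  assumes imm: "immersion U F" and sW: "smooth_on2 U W" and WT: "\<forall>q\<in>U. W q \<in> Tsp F q"
    and om: "\<forall>q\<in>U. \<forall>u\<in>Tsp F q. om q u = W q \<bullet> u" and G: "GHF U F om" and p: "p \<in> U"
  defines "BN \<equiv> \<lambda>j i k. pd W j p \<bullet> (pd (pd F k) i p - tproj F p (pd (pd F k) i p))"
  shows "Lop F om p v = (\<Sum>k\<in>UNIV. crd F p v $ k * (
       (W p \<bullet> pd F k p) / 2 + (pd W k p \<bullet> (F p - tproj F p (F p))) / 2
     + (\<Sum>i\<in>UNIV. \<Sum>j\<in>UNIV. gi F p i j * (BN k i j - BN i k j))))"
proof -
  have U: "open U" using imm imm_open by blast
  have sF: "smooth_on2 U F" using imm imm_smooth by blast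
  have r: "reg F p" using imm p imm_reg by blast
  have d: "gdet F p \<noteq> 0" using gdet_pos[OF r] by simp
  have Ssym: "Sf W F p 2 1 = Sf W F p 1 2" using sym_on_U[OF imm sW WT om G p] by simp
  have Wsym: "Wtf W F p a b c = Wtf W F p b a c" for a b c
    unfolding Wtf_def using smooth_clairaut[OF sW U p] by simp
  have Csym: "Cf F p a b c = Cf F p b a c" for a b c
    unfolding Cf_def using smooth_clairaut[OF sF U p] by simp
  have tr: "(\<Sum>i\<in>UNIV. \<Sum>j\<in>UNIV. gi F p i j * (Wtf W F p k i j + Bf W F p i k j))
      = ((pd W k p \<bullet> F p) + (W p \<bullet> pd F k p)) / 2
        + (\<Sum>i\<in>UNIV. \<Sum>j\<in>UNIV. \<Sum>a\<in>UNIV. \<Sum>b\<in>UNIV. gi F p i a * (Cf F p k a b + Cf F p k b a) * gi F p b j * Sf W F p i j)" for k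
  proof (rule core_trace[where G = "gm F p" and D = "gdet F p" and WF = "W p \<bullet> F p"
        and dD = "(Cf F p k 1 1 + Cf F p k 1 1) * gm F p 2 2 + gm F p 1 1 * (Cf F p k 2 2 + Cf F p k 2 2)
                   - 2 * gm F p 1 2 * (Cf F p k 1 2 + Cf F p k 2 1)"])
    show "gdet F p = gm F p 1 1 * gm F p 2 2 - gm F p 1 2 * gm F p 1 2" by (simp add: gdet_def power2_eq_square)
    show "gdet F p \<noteq> 0" by (rule d)
    show "gi F p 1 1 = gm F p 2 2 / gdet F p" "gi F p 2 2 = gm F p 1 1 / gdet F p"
      "gi F p 1 2 = - gm F p 1 2 / gdet F p" "gi F p 2 1 = - gm F p 1 2 / gdet F p" by (simp_all add: gi_def)
    show "Sf W F p 2 1 = Sf W F p 1 2" by (rule Ssym)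
    show "Cf F p k 2 1 + Cf F p k 1 2 = Cf F p k 1 2 + Cf F p k 2 1" by simp
    show "(Cf F p k 1 1 + Cf F p k 1 1) * gm F p 2 2 + gm F p 1 1 * (Cf F p k 2 2 + Cf F p k 2 2)
        - 2 * gm F p 1 2 * (Cf F p k 1 2 + Cf F p k 2 1)
        = (Cf F p k 1 1 + Cf F p k 1 1) * gm F p 2 2 + gm F p 1 1 * (Cf F p k 2 2 + Cf F p k 2 2)
        - 2 * gm F p 1 2 * (Cf F p k 1 2 + Cf F p k 2 1)" ..
    show "gm F p 2 2 * Sf W F p 1 1 - gm F p 1 2 * (Sf W F p 1 2 + Sf W F p 2 1) + gm F p 1 1 * Sf W F p 2 2
        = gdet F p * (W p \<bullet> F p) / 2"
      using P_zero[OF imm sW WT om G p] by simp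
    show "(Cf F p k 2 2 + Cf F p k 2 2) * Sf W F p 1 1 + gm F p 2 2 * (Wtf W F p k 1 1 + Bf W F p 1 k 1) -
      ((Cf F p k 1 2 + Cf F p k 2 1) * (Sf W F p 1 2 + Sf W F p 2 1) +
       gm F p 1 2 * (Wtf W F p k 1 2 + Bf W F p 1 k 2 + (Wtf W F p k 2 1 + Bf W F p 2 k 1))) +
      (Cf F p k 1 1 + Cf F p k 1 1) * Sf W F p 2 2 + gm F p 1 1 * (Wtf W F p k 2 2 + Bf W F p 2 k 2) =
      ((Cf F p k 1 1 + Cf F p k 1 1) * gm F p 2 2 + gm F p 1 1 * (Cf F p k 2 2 + Cf F p k 2 2)
        - 2 * gm F p 1 2 * (Cf F p k 1 2 + Cf F p k 2 1)) * (W p \<bullet> F p) / 2 +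
      gdet F p * (pd W k p \<bullet> F p + W p \<bullet> pd F k p) / 2"
      using c3_at[OF imm sW WT om G p, of k] by simp
  qed
  have main: "(\<Sum>i\<in>UNIV. \<Sum>j\<in>UNIV. gi F p i j * (Wtf W F p i j k
            - (\<Sum>a\<in>UNIV. (\<Sum>b\<in>UNIV. gi F p a b * Cf F p i j b) * Sf W F p a k)
            - (\<Sum>a\<in>UNIV. (\<Sum>b\<in>UNIV. gi F p a b * Cf F p i k b) * Sf W F p j a) + Bf W F p j i k))
         - (1/2) * (\<Sum>i\<in>UNIV. (\<Sum>b\<in>UNIV. gi F p i b * (F p \<bullet> pd F b p)) * Sf W F p i k)
       = (W p \<bullet> pd F k p) / 2 + (pd W k p \<bullet> (F p - tproj F p (F p))) / 2
         + (\<Sum>i\<in>UNIV. \<Sum>j\<in>UNIV. gi F p i j * (BN k i j - BN i k j))" for k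
  proof (rule core_main[where Wx = "\<lambda>k. pd W k p \<bullet> F p"])
    show "gi F p 2 1 = gi F p 1 2" by (rule gi_sym)
    show "Sf W F p 2 1 = Sf W F p 1 2" by (rule Ssym)
    show "\<And>a b c. Wtf W F p a b c = Wtf W F p b a c" by (rule Wsym)
    show "\<And>a b c. Cf F p a b c = Cf F p b a c" by (rule Csym)
    show "\<And>j i k. Bf W F p j i k = (\<Sum>a\<in>UNIV. Cf F p i k a * (\<Sum>b\<in>UNIV. gi F p a b * Sf W F p j b)) + BN j i k"
      unfolding BN_def by (rule hB_at[OF r])
    show "\<And>i j k. Wtf W F p i j k + Bf W F p j i k = Wtf W F p i k j + Bf W F p k i j"
      by (rule c1_at[OF imm sW WT om G p])
    show "(\<Sum>i\<in>UNIV. \<Sum>j\<in>UNIV. gi F p i j * (Wtf W F p k i j + Bf W F p i k j)) =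
        (pd W k p \<bullet> F p + W p \<bullet> pd F k p) / 2 +
        (\<Sum>i\<in>UNIV. \<Sum>j\<in>UNIV. \<Sum>a\<in>UNIV. \<Sum>b\<in>UNIV. gi F p i a * (Cf F p k a b + Cf F p k b a) * gi F p b j * Sf W F p i j)"
      by (rule tr)
    show "pd W k p \<bullet> F p = (\<Sum>a\<in>UNIV. (F p \<bullet> pd F a p) * (\<Sum>b\<in>UNIV. gi F p a b * Sf W F p k b))
        + pd W k p \<bullet> (F p - tproj F p (F p))"
      by (rule hx_at[OF r])
  qed
  show ?thesis unfolding Lop_expand[OF imm sW WT om p] main ..
qed



definition af :: "(real^2 \<Rightarrow> real^'n) \<Rightarrow> (real^2 \<Rightarrow> real^'n) \<Rightarrow> real^2 \<Rightarrow> 2 \<Rightarrow> 2 \<Rightarrow> real" where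
  "af F N p i j = pd (pd F j) i p \<bullet> N p"

lemma nf_smooth: "normal_frame U F \<nu> \<Longrightarrow> a < CARD('n) - 2 \<Longrightarrow> smooth_on2 U (\<nu> a)"
  for \<nu> :: "nat \<Rightarrow> real^2 \<Rightarrow> real^'n" unfolding normal_frame_def by auto

lemma nf_perp: "normal_frame U F \<nu> \<Longrightarrow> a < CARD('n) - 2 \<Longrightarrow> q \<in> U \<Longrightarrow> w \<in> Tsp F q \<Longrightarrow> \<nu> a q \<bullet> w = 0"
  for \<nu> :: "nat \<Rightarrow> real^2 \<Rightarrow> real^'n" unfolding normal_frame_def by auto

lemma nf_on: "normal_frame U F \<nu> \<Longrightarrow> a < CARD('n) - 2 \<Longrightarrow> b < CARD('n) - 2 \<Longrightarrow> q \<in> U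
   \<Longrightarrow> \<nu> a q \<bullet> \<nu> b q = (if a = b then 1 else 0)"
  for \<nu> :: "nat \<Rightarrow> real^2 \<Rightarrow> real^'n" unfolding normal_frame_def by auto

lemma nf_nproj:
  fixes \<nu> :: "nat \<Rightarrow> real^2 \<Rightarrow> real^'n"
  assumes "immersion U F" "normal_frame U F \<nu>" "q \<in> U"
  shows "y - tproj F q y = (\<Sum>a<CARD('n) - 2. (y \<bullet> \<nu> a q) *\<^sub>R \<nu> a q)"
  by (rule nproj_frame) (use imm_reg[OF assms(1,3)] nf_perp[OF assms(2) _ assms(3)] nf_on[OF assms(2) _ _ assms(3)] in auto)

lemma n1:
  fixes \<nu> :: "nat \<Rightarrow> real^2 \<Rightarrow> real^'n"
  assumes imm: "immersion U F" and nf: "normal_frame U F \<nu>" and p: "p \<in> U" and a: "a < CARD('n) - 2"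
  shows "pd (\<nu> a) i p \<bullet> pd F k p = - af F (\<nu> a) p i k"
proof -
  have U: "open U" using imm imm_open by blast
  have sF: "smooth_on2 U F" using imm imm_smooth by blast
  have sN: "smooth_on2 U (\<nu> a)" using nf a nf_smooth by blast
  have "pd (\<lambda>q. \<nu> a q \<bullet> pd F k q) i p = 0"
    by (rule pd_zero_on[OF U p]) (use nf_perp[OF nf a] pd_in_Tsp in blast)
  moreover have "pd (\<lambda>q. \<nu> a q \<bullet> pd F k q) i p = pd (\<nu> a) i p \<bullet> pd F k p + \<nu> a p \<bullet> pd (pd F k) i p"
    by (rule pd_inner) (use smooth_diff[OF sN U p] sdiff1[OF sF U p] in auto)
  ultimately show ?thesis unfolding af_def by (simp add: inner_commute)
qed

lemma n2:
  fixes \<nu> :: "nat \<Rightarrow> real^2 \<Rightarrow> real^'n"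
  assumes imm: "immersion U F" and nf: "normal_frame U F \<nu>" and p: "p \<in> U" and a: "a < CARD('n) - 2"
    and sW: "smooth_on2 U W" and WT: "\<forall>q\<in>U. W q \<in> Tsp F q"
  shows "pd W k p \<bullet> \<nu> a p = (\<Sum>m\<in>UNIV. (W p \<bullet> Fd F p m) * af F (\<nu> a) p k m)"
proof -
  have U: "open U" using imm imm_open by blast
  have r: "reg F p" using imm p imm_reg by blast
  have sN: "smooth_on2 U (\<nu> a)" using nf a nf_smooth by blast
  have "pd (\<lambda>q. W q \<bullet> \<nu> a q) k p = 0"
    by (rule pd_zero_on[OF U p]) (use nf_perp[OF nf a] WT in \<open>auto simp: inner_commute\<close>)
  moreover have "pd (\<lambda>q. W q \<bullet> \<nu> a q) k p = pd W k p \<bullet> \<nu> a p + W p \<bullet> pd (\<nu> a) k p"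
    by (rule pd_inner) (use smooth_diff[OF sN U p] smooth_diff[OF sW U p] in auto)
  moreover have "W p \<bullet> pd (\<nu> a) k p = - (\<Sum>m\<in>UNIV. (W p \<bullet> Fd F p m) * af F (\<nu> a) p k m)"
  proof -
    have "W p \<bullet> pd (\<nu> a) k p = (\<Sum>m\<in>UNIV. (W p \<bullet> Fd F p m) *\<^sub>R pd F m p) \<bullet> pd (\<nu> a) k p"
      using tang_expand[OF r] WT p by metis
    also have "\<dots> = (\<Sum>m\<in>UNIV. (W p \<bullet> Fd F p m) * (pd (\<nu> a) k p \<bullet> pd F m p))"
      by (simp add: inner_sum_left inner_sum_right inner_commute)
    finally show ?thesis using n1[OF imm nf p a] by (simp add: sum_negf)
  qed
  ultimately show ?thesis by simp
qed

lemma af_sym: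
  assumes imm: "immersion U F" and p: "p \<in> U"
  shows "af F N p i j = af F N p j i"
  unfolding af_def using smooth_clairaut[OF imm_smooth[OF imm] imm_open[OF imm] p] by simp

lemma BN_frame:
  fixes \<nu> :: "nat \<Rightarrow> real^2 \<Rightarrow> real^'n"
  assumes imm: "immersion U F" and nf: "normal_frame U F \<nu>" and p: "p \<in> U"
    and sW: "smooth_on2 U W" and WT: "\<forall>q\<in>U. W q \<in> Tsp F q"
  shows "pd W j p \<bullet> (pd (pd F k) i p - tproj F p (pd (pd F k) i p))
     = (\<Sum>a<CARD('n) - 2. (\<Sum>m\<in>UNIV. (W p \<bullet> Fd F p m) * af F (\<nu> a) p j m) * af F (\<nu> a) p i k)"
  unfolding nf_nproj[OF imm nf p]
  by (simp add: inner_sum_right n2[OF imm nf p _ sW WT] af_def mult.commute)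

lemma xN_frame:
  fixes \<nu> :: "nat \<Rightarrow> real^2 \<Rightarrow> real^'n"
  assumes imm: "immersion U F" and nf: "normal_frame U F \<nu>" and p: "p \<in> U"
    and sW: "smooth_on2 U W" and WT: "\<forall>q\<in>U. W q \<in> Tsp F q"
  shows "pd W k p \<bullet> (F p - tproj F p (F p))
     = (\<Sum>a<CARD('n) - 2. (F p \<bullet> \<nu> a p) * (\<Sum>m\<in>UNIV. (W p \<bullet> Fd F p m) * af F (\<nu> a) p k m))"
  unfolding nf_nproj[OF imm nf p]
  by (simp add: inner_sum_right n2[OF imm nf p _ sW WT])

lemma Aform_tang:
  fixes \<nu> :: "nat \<Rightarrow> real^2 \<Rightarrow> real^'n"
  assumes imm: "immersion U F" and nf: "normal_frame U F \<nu>" and p: "p \<in> U" and a: "a < CARD('n) - 2"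
    and X: "X \<in> Tsp F p" and Y: "Y \<in> Tsp F p"
  shows "Aform F (\<nu> a) p X Y = - (\<Sum>i\<in>UNIV. \<Sum>k\<in>UNIV. (X \<bullet> Fd F p i) * (Y \<bullet> Fd F p k) * af F (\<nu> a) p i k)"
proof -
  have r: "reg F p" using imm p imm_reg by blast
  have "pd (\<nu> a) i p \<bullet> Y = - (\<Sum>k\<in>UNIV. (Y \<bullet> Fd F p k) * af F (\<nu> a) p i k)" for i
  proof -
    have "pd (\<nu> a) i p \<bullet> Y = pd (\<nu> a) i p \<bullet> (\<Sum>k\<in>UNIV. (Y \<bullet> Fd F p k) *\<^sub>R pd F k p)"
      using tang_expand[OF r Y] by metis
    also have "\<dots> = (\<Sum>k\<in>UNIV. (Y \<bullet> Fd F p k) * (pd (\<nu> a) i p \<bullet> pd F k p))"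
      by (simp add: inner_sum_right)
    finally show ?thesis using n1[OF imm nf p a] by (simp add: sum_negf)
  qed
  then show ?thesis unfolding Aform_def ddir_def crd_tang[OF r X]
    by (simp add: inner_sum_left sum_distrib_left sum_negf mult.assoc)
qed

lemma dtproj_dot:
  fixes \<nu> :: "nat \<Rightarrow> real^2 \<Rightarrow> real^'n"
  assumes imm: "immersion U F" and nf: "normal_frame U F \<nu>" and p: "p \<in> U" and sG: "smooth_on2 U G"
  shows "pd (\<lambda>q. tproj F q (G q)) d p \<bullet> pd F c p
      = pd G d p \<bullet> pd F c p + (\<Sum>a<CARD('n) - 2. (G p \<bullet> \<nu> a p) * af F (\<nu> a) p d c)"
proof -
  have U: "open U" using imm imm_open by blast
  have r: "reg F p" using imm p imm_reg by blast
  have sN: "smooth_on2 U (\<nu> a)" if "a < CARD('n) - 2" for a using nf that nf_smooth by blast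
  have dN: "\<nu> a differentiable (at p)" if "a < CARD('n) - 2" for a using smooth_diff[OF sN[OF that] U p] .
  have dG: "G differentiable (at p)" using smooth_diff[OF sG U p] .
  have dGN: "(\<lambda>q. G q \<bullet> \<nu> a q) differentiable (at p)" if "a < CARD('n) - 2" for a
    using dN[OF that] dG by simp
  have dT: "(\<lambda>q. (G q \<bullet> \<nu> a q) *\<^sub>R \<nu> a q) differentiable (at p)" if "a < CARD('n) - 2" for a
    using dN[OF that] dGN[OF that] by simp
  have "pd (\<lambda>q. tproj F q (G q)) d p = pd (\<lambda>q. G q - (\<Sum>a<CARD('n) - 2. (G q \<bullet> \<nu> a q) *\<^sub>R \<nu> a q)) d p"
  proof (rule pd_local[OF U p])
    fix q assume "q \<in> U"
    from nf_nproj[OF imm nf this, of "G q"]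
    show "tproj F q (G q) = G q - (\<Sum>a<CARD('n) - 2. (G q \<bullet> \<nu> a q) *\<^sub>R \<nu> a q)" by (simp add: algebra_simps)
  qed
  also have "\<dots> = pd G d p - (\<Sum>a<CARD('n) - 2. pd (\<lambda>q. (G q \<bullet> \<nu> a q) *\<^sub>R \<nu> a q) d p)"
  proof -
    have "pd (\<lambda>q. \<Sum>a<CARD('n) - 2. (G q \<bullet> \<nu> a q) *\<^sub>R \<nu> a q) d p
        = (\<Sum>a<CARD('n) - 2. pd (\<lambda>q. (G q \<bullet> \<nu> a q) *\<^sub>R \<nu> a q) d p)"
      by (rule pd_sum[where f = "\<lambda>a q. (G q \<bullet> \<nu> a q) *\<^sub>R \<nu> a q"]) (use dT in auto)
    moreover have "(\<lambda>q. \<Sum>a<CARD('n) - 2. (G q \<bullet> \<nu> a q) *\<^sub>R \<nu> a q) differentiable (at p)"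
      by (rule differentiable_sum) (use dT in auto)
    ultimately show ?thesis by (subst pd_diff) (use dG in auto)
  qed
  also have "\<dots> = pd G d p - (\<Sum>a<CARD('n) - 2. pd (\<lambda>q. G q \<bullet> \<nu> a q) d p *\<^sub>R \<nu> a p + (G p \<bullet> \<nu> a p) *\<^sub>R pd (\<nu> a) d p)"
    by (intro arg_cong2[where f = "(-)"] refl sum.cong) (use dGN dN in \<open>auto simp: pd_scaleR\<close>)
  finally have e: "pd (\<lambda>q. tproj F q (G q)) d p = \<dots>" .
  have z: "\<nu> a p \<bullet> pd F c p = 0" if "a < CARD('n) - 2" for a using nf_perp[OF nf that p pd_in_Tsp] .
  show ?thesis unfolding e
    by (simp add: inner_diff_left inner_sum_left inner_add_left z n1[OF imm nf p] sum_negf)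
qed

lemma gaussK_frame:
  fixes \<nu> :: "nat \<Rightarrow> real^2 \<Rightarrow> real^'n"
  assumes imm: "immersion U F" and nf: "normal_frame U F \<nu>" and p: "p \<in> U"
  shows "gaussK F p = (\<Sum>a<CARD('n) - 2. af F (\<nu> a) p 2 2 * af F (\<nu> a) p 1 1 - af F (\<nu> a) p 1 2 * af F (\<nu> a) p 1 2) / gdet F p"
proof -
  have U: "open U" using imm imm_open by blast
  have sF: "smooth_on2 U F" using imm imm_smooth by blast
  have r: "reg F p" using imm p imm_reg by blast
  have s22: "smooth_on2 U (pd (pd F 2) 2)" "smooth_on2 U (pd (pd F 2) 1)" using sF smooth_pd by blast+
  have cl: "pd (pd (pd F 2) 2) 1 p = pd (pd (pd F 2) 1) 2 p"
    using smooth_clairaut[OF smooth_pd[OF sF] U p] by simp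
  have as: "af F (\<nu> a) p 2 1 = af F (\<nu> a) p 1 2" for a by (rule af_sym[OF imm p])
  have num: "(tproj F p (pd (\<lambda>q. tproj F q (pd (pd F 2) 2 q)) 1 p)
       - tproj F p (pd (\<lambda>q. tproj F q (pd (pd F 2) 1 q)) 2 p)) \<bullet> pd F 1 p
     = (\<Sum>a<CARD('n) - 2. af F (\<nu> a) p 2 2 * af F (\<nu> a) p 1 1 - af F (\<nu> a) p 1 2 * af F (\<nu> a) p 1 2)"
    unfolding inner_diff_left tproj_dot[OF r pd_in_Tsp]
      dtproj_dot[OF imm nf p s22(1)] dtproj_dot[OF imm nf p s22(2)] cl
    by (simp add: af_def[symmetric] as sum_subtractf)
  show ?thesis unfolding gaussK_def num gdet_def gm_def ..
qed



lemma gauss_alg: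
  fixes G a Gi :: "2 \<Rightarrow> 2 \<Rightarrow> real" and Wc :: "2 \<Rightarrow> real" and D :: real
  assumes D: "D = G 1 1 * G 2 2 - G 1 2 * G 1 2" "D \<noteq> 0"
    and Gsym: "G 2 1 = G 1 2" and asym: "a 2 1 = a 1 2"
    and Gi: "Gi 1 1 = G 2 2 / D" "Gi 2 2 = G 1 1 / D" "Gi 1 2 = - G 1 2 / D" "Gi 2 1 = - G 1 2 / D"
  shows "(\<Sum>i\<in>UNIV. \<Sum>j\<in>UNIV. Gi i j * ((\<Sum>m\<in>UNIV. Wc m * a k m) * a i j - (\<Sum>m\<in>UNIV. Wc m * a i m) * a k j))
     = (a 2 2 * a 1 1 - a 1 2 * a 1 2) / D * (\<Sum>m\<in>UNIV. Wc m * G m k)"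
proof -
  have k: "k = 1 \<or> k = 2" by (rule exhaust_2)
  then show ?thesis
  proof
    assume k: "k = 1"
    show ?thesis unfolding k sum_2 Gi Gsym asym using D(2)
      by (simp add: field_simps; (simp add: D(1) algebra_simps)?)
  next
    assume k: "k = 2"
    show ?thesis unfolding k sum_2 Gi Gsym asym using D(2)
      by (simp add: field_simps; (simp add: D(1) algebra_simps)?)
  qed
qed

lemma gauss2_alg:
  fixes G a Gi :: "2 \<Rightarrow> 2 \<Rightarrow> real" and Wc vc :: "2 \<Rightarrow> real" and D :: real
  assumes D: "D = G 1 1 * G 2 2 - G 1 2 * G 1 2" "D \<noteq> 0"
    and Gsym: "G 2 1 = G 1 2" and asym: "a 2 1 = a 1 2"
    and Gi: "Gi 1 1 = G 2 2 / D" "Gi 2 2 = G 1 1 / D" "Gi 1 2 = - G 1 2 / D" "Gi 2 1 = - G 1 2 / D"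
  shows "(\<Sum>i\<in>UNIV. \<Sum>k\<in>UNIV. Gi i k * a i k) * (\<Sum>i\<in>UNIV. \<Sum>k\<in>UNIV. Wc i * vc k * a i k)
      - (a 2 2 * a 1 1 - a 1 2 * a 1 2) / D * (\<Sum>k\<in>UNIV. vc k * (\<Sum>m\<in>UNIV. Wc m * G m k))
     = (\<Sum>i\<in>UNIV. \<Sum>p\<in>UNIV. \<Sum>q\<in>UNIV. \<Sum>k\<in>UNIV. Wc i * a i p * Gi p q * a q k * vc k)"
  unfolding sum_2 Gi Gsym asym using D(2)
  by (simp add: field_simps; (simp add: D(1) algebra_simps)?)

lemma part1:
  fixes \<nu> :: "nat \<Rightarrow> real^2 \<Rightarrow> real^'n"
  assumes imm: "immersion U F" and sW: "smooth_on2 U W" and WT: "\<forall>q\<in>U. W q \<in> Tsp F q"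
    and om: "\<forall>q\<in>U. \<forall>u\<in>Tsp F q. om q u = W q \<bullet> u" and G: "GHF U F om"
    and nf: "normal_frame U F \<nu>" and p: "p \<in> U" and v: "v \<in> Tsp F p"
  shows "Lop F om p v = gaussK F p * om p v + (1/2) * om p v
           - (\<Sum>a<CARD('n) - 2. (F p \<bullet> \<nu> a p) / 2 * Aform F (\<nu> a) p (W p) v)"
proof -
  have r: "reg F p" using imm p imm_reg by blast
  have d: "gdet F p \<noteq> 0" using gdet_pos[OF r] by simp
  have Wp: "W p \<in> Tsp F p" using WT p by blast
  define vc where "vc k = v \<bullet> Fd F p k" for k
  define Wc where "Wc m = W p \<bullet> Fd F p m" for m
  define A where "A a = af F (\<nu> a) p" for a
  define K where "K a = (A a 2 2 * A a 1 1 - A a 1 2 * A a 1 2) / gdet F p" for a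
  define w where "w k = W p \<bullet> pd F k p" for k
  have omv: "om p v = W p \<bullet> v" using om p v by blast
  have Wv: "W p \<bullet> v = (\<Sum>k\<in>UNIV. vc k * w k)"
  proof -
    have "W p \<bullet> v = W p \<bullet> (\<Sum>k\<in>UNIV. vc k *\<^sub>R pd F k p)" using tang_expand[OF r v] vc_def by simp
    then show ?thesis by (simp add: inner_sum_right w_def)
  qed
  have wk: "w k = (\<Sum>m\<in>UNIV. Wc m * gm F p m k)" for k
  proof -
    have "w k = (\<Sum>m\<in>UNIV. Wc m *\<^sub>R pd F m p) \<bullet> pd F k p" using tang_expand[OF r Wp] Wc_def w_def by simp
    then show ?thesis by (simp add: inner_sum_left gm_def)
  qed
  have Asym: "A a i j = A a j i" for a i j unfolding A_def by (rule af_sym[OF imm p])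
  have Af: "Aform F (\<nu> a) p (W p) v = - (\<Sum>i\<in>UNIV. \<Sum>k\<in>UNIV. Wc i * vc k * A a i k)" if "a < CARD('n) - 2" for a
    unfolding Aform_tang[OF imm nf p that Wp v] Wc_def vc_def A_def ..
  have gK: "gaussK F p = (\<Sum>a<CARD('n) - 2. K a)"
    unfolding gaussK_frame[OF imm nf p] K_def A_def by (simp add: sum_divide_distrib)
  have gauss: "(\<Sum>i\<in>UNIV. \<Sum>j\<in>UNIV. gi F p i j * ((\<Sum>m\<in>UNIV. Wc m * A a k m) * A a i j - (\<Sum>m\<in>UNIV. Wc m * A a i m) * A a k j))
       = K a * w k" for a k
    unfolding K_def wk
    by (rule gauss_alg) (use d in \<open>auto simp: gdet_def power2_eq_square gi_def gm_sym Asym[of a 2 1]\<close>)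
  define BN where "BN j i k = pd W j p \<bullet> (pd (pd F k) i p - tproj F p (pd (pd F k) i p))" for j i k
  have BN: "BN j i k = (\<Sum>a<CARD('n) - 2. (\<Sum>m\<in>UNIV. Wc m * A a j m) * A a i k)" for j i k
    unfolding BN_def BN_frame[OF imm nf p sW WT] Wc_def A_def ..
  have BNs: "(\<Sum>i\<in>UNIV. \<Sum>j\<in>UNIV. gi F p i j * (BN k i j - BN i k j)) = gaussK F p * w k" for k
  proof -
    have "(\<Sum>i\<in>UNIV. \<Sum>j\<in>UNIV. gi F p i j * (BN k i j - BN i k j))
       = (\<Sum>i\<in>UNIV. \<Sum>j\<in>UNIV. \<Sum>a<CARD('n) - 2. gi F p i j * ((\<Sum>m\<in>UNIV. Wc m * A a k m) * A a i j - (\<Sum>m\<in>UNIV. Wc m * A a i m) * A a k j))"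
      unfolding BN by (intro sum.cong refl) (simp add: sum_distrib_left sum_subtractf[symmetric] right_diff_distrib)
    also have "\<dots> = (\<Sum>a<CARD('n) - 2. \<Sum>i\<in>UNIV. \<Sum>j\<in>UNIV. gi F p i j * ((\<Sum>m\<in>UNIV. Wc m * A a k m) * A a i j - (\<Sum>m\<in>UNIV. Wc m * A a i m) * A a k j))"
      by (simp add: sum.swap[of _ "{..<CARD('n) - 2}"])
    also have "\<dots> = (\<Sum>a<CARD('n) - 2. K a * w k)" unfolding gauss ..
    finally show ?thesis unfolding gK by (simp add: sum_distrib_right)
  qed
  have xN: "pd W k p \<bullet> (F p - tproj F p (F p)) = (\<Sum>a<CARD('n) - 2. (F p \<bullet> \<nu> a p) * (\<Sum>m\<in>UNIV. Wc m * A a k m))" for k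
    unfolding xN_frame[OF imm nf p sW WT] Wc_def A_def ..
  have crdv: "crd F p v $ k = vc k" for k unfolding vc_def by (rule crd_tang[OF r v])
  have "Lop F om p v = (\<Sum>k\<in>UNIV. vc k * (w k / 2 + pd W k p \<bullet> (F p - tproj F p (F p)) / 2 + gaussK F p * w k))"
    unfolding part1_core[OF imm sW WT om G p] crdv BN_def[symmetric] BNs w_def ..
  also have "\<dots> = gaussK F p * (\<Sum>k\<in>UNIV. vc k * w k) + (1/2) * (\<Sum>k\<in>UNIV. vc k * w k)
      + (\<Sum>a<CARD('n) - 2. (F p \<bullet> \<nu> a p) / 2 * (\<Sum>i\<in>UNIV. \<Sum>k\<in>UNIV. Wc i * vc k * A a i k))"
    unfolding xN sum_2 by (simp add: algebra_simps sum_distrib_left sum_divide_distrib add_divide_distrib sum.distrib Asym[of _ 2 1])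
  also have "\<dots> = gaussK F p * om p v + (1/2) * om p v
           - (\<Sum>a<CARD('n) - 2. (F p \<bullet> \<nu> a p) / 2 * Aform F (\<nu> a) p (W p) v)"
    unfolding omv Wv by (simp add: Af sum_negf)
  finally show ?thesis .
qed

lemma part2:
  fixes \<nu> :: "nat \<Rightarrow> real^2 \<Rightarrow> real^'n"
  assumes imm: "immersion U F" and sW: "smooth_on2 U W" and WT: "\<forall>q\<in>U. W q \<in> Tsp F q"
    and om: "\<forall>q\<in>U. \<forall>u\<in>Tsp F q. om q u = W q \<bullet> u" and G: "GHF U F om"
    and nf: "normal_frame U F \<nu>" and p: "p \<in> U" and v: "v \<in> Tsp F p" and e: "onframe F p e"
    and ss: "self_shrinker U F \<nu>"
  shows "Lop F om p v = (1/2) * om p v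
           - (\<Sum>a<CARD('n) - 2. \<Sum>j\<in>UNIV. Aform F (\<nu> a) p (W p) (e j) * Aform F (\<nu> a) p (e j) v)"
proof -
  have r: "reg F p" using imm p imm_reg by blast
  have d: "gdet F p \<noteq> 0" using gdet_pos[OF r] by simp
  have Wp: "W p \<in> Tsp F p" using WT p by blast
  define vc where "vc k = v \<bullet> Fd F p k" for k
  define Wc where "Wc m = W p \<bullet> Fd F p m" for m
  define A where "A a = af F (\<nu> a) p" for a
  define K where "K a = (A a 2 2 * A a 1 1 - A a 1 2 * A a 1 2) / gdet F p" for a
  define t where "t a = (\<Sum>i\<in>UNIV. \<Sum>k\<in>UNIV. gi F p i k * A a i k)" for a
  define M where "M a = (\<Sum>i\<in>UNIV. \<Sum>k\<in>UNIV. Wc i * vc k * A a i k)" for a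
  have omv: "om p v = W p \<bullet> v" using om p v by blast
  have Wv: "W p \<bullet> v = (\<Sum>k\<in>UNIV. vc k * (\<Sum>m\<in>UNIV. Wc m * gm F p m k))"
  proof -
    have "W p \<bullet> v = W p \<bullet> (\<Sum>k\<in>UNIV. vc k *\<^sub>R pd F k p)" using tang_expand[OF r v] vc_def by simp
    also have "\<dots> = (\<Sum>k\<in>UNIV. vc k * (W p \<bullet> pd F k p))" by (simp add: inner_sum_right)
    also have "\<dots> = (\<Sum>k\<in>UNIV. vc k * (\<Sum>m\<in>UNIV. Wc m * gm F p m k))"
    proof (intro sum.cong refl arg_cong2[where f = "(*)"])
      fix k
      have "W p \<bullet> pd F k p = (\<Sum>m\<in>UNIV. Wc m *\<^sub>R pd F m p) \<bullet> pd F k p" using tang_expand[OF r Wp] Wc_def by simp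
      then show "W p \<bullet> pd F k p = (\<Sum>m\<in>UNIV. Wc m * gm F p m k)" by (simp add: inner_sum_left gm_def)
    qed
    finally show ?thesis .
  qed
  have Asym: "A a i j = A a j i" for a i j unfolding A_def by (rule af_sym[OF imm p])
  have Af: "Aform F (\<nu> a) p (W p) v = - M a" if "a < CARD('n) - 2" for a
    unfolding Aform_tang[OF imm nf p that Wp v] Wc_def vc_def A_def M_def ..
  have gK: "gaussK F p = (\<Sum>a<CARD('n) - 2. K a)"
    unfolding gaussK_frame[OF imm nf p] K_def A_def by (simp add: sum_divide_distrib)
  have eT: "e j \<in> Tsp F p" for j using e onframe_Tsp by blast
  have etr: "(\<Sum>j\<in>UNIV. (e j \<bullet> Fd F p i) * (e j \<bullet> Fd F p k)) = gi F p i k" for i k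
    using onframe_trace[OF r e, of i k] crd_tang[OF r eT] by simp
  have AA: "(\<Sum>j\<in>UNIV. Aform F (\<nu> a) p (W p) (e j) * Aform F (\<nu> a) p (e j) v)
      = (\<Sum>i\<in>UNIV. \<Sum>s\<in>UNIV. \<Sum>q\<in>UNIV. \<Sum>k\<in>UNIV. Wc i * A a i s * gi F p s q * A a q k * vc k)"
    if "a < CARD('n) - 2" for a
    unfolding Aform_tang[OF imm nf p that Wp eT] Aform_tang[OF imm nf p that eT v] etr[symmetric]
      Wc_def[symmetric] vc_def[symmetric] A_def[symmetric] sum_2
    by (simp add: algebra_simps)
  have ef: "onframe F p (efr F p)" by (rule efr_onframe[OF r])
  have efT: "efr F p j \<in> Tsp F p" for j using ef onframe_Tsp by blast
  have trA: "trT F p (Aform F (\<nu> a) p) = - t a" if "a < CARD('n) - 2" for a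
  proof -
    have etr2: "(\<Sum>j\<in>UNIV. (efr F p j \<bullet> Fd F p i) * (efr F p j \<bullet> Fd F p k)) = gi F p i k" for i k
      using onframe_trace[OF r ef, of i k] crd_tang[OF r efT] by simp
    show ?thesis
      unfolding trT_def Aform_tang[OF imm nf p that efT efT] t_def etr2[symmetric] A_def[symmetric] sum_2
      by (simp add: algebra_simps)
  qed
  have xnu: "F p \<bullet> \<nu> b p = - 2 * t b" if b: "b < CARD('n) - 2" for b
  proof -
    have "Hvec F \<nu> p \<bullet> \<nu> b p = (1/2) * (nproj F p (F p) \<bullet> \<nu> b p)"
      using ss p unfolding self_shrinker_def by simp
    moreover have "Hvec F \<nu> p \<bullet> \<nu> b p = trT F p (Aform F (\<nu> b) p)"
    proof -
      have "Hvec F \<nu> p \<bullet> \<nu> b p = (\<Sum>a<CARD('n) - 2. trT F p (Aform F (\<nu> a) p) * (if a = b then 1 else 0))"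
        unfolding Hvec_def inner_sum_left by (intro sum.cong refl) (simp add: nf_on[OF nf _ b p])
      also have "\<dots> = trT F p (Aform F (\<nu> b) p)" using b by (simp add: if_distrib cong: if_cong)
      finally show ?thesis .
    qed
    moreover have "nproj F p (F p) \<bullet> \<nu> b p = F p \<bullet> \<nu> b p"
      using nf_perp[OF nf b p tproj_Tsp[OF r]] unfolding nproj_def by (simp add: inner_diff_right inner_commute)
    ultimately show ?thesis using trA[OF b] by simp
  qed
  have per: "(F p \<bullet> \<nu> a p) / 2 * Aform F (\<nu> a) p (W p) v - K a * om p v
      = (\<Sum>j\<in>UNIV. Aform F (\<nu> a) p (W p) (e j) * Aform F (\<nu> a) p (e j) v)" if a: "a < CARD('n) - 2" for a
  proof -
    have "t a * M a - K a * (\<Sum>k\<in>UNIV. vc k * (\<Sum>m\<in>UNIV. Wc m * gm F p m k))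
        = (\<Sum>i\<in>UNIV. \<Sum>s\<in>UNIV. \<Sum>q\<in>UNIV. \<Sum>k\<in>UNIV. Wc i * A a i s * gi F p s q * A a q k * vc k)"
      unfolding t_def M_def K_def
      by (rule gauss2_alg) (use d in \<open>auto simp: gdet_def power2_eq_square gi_def gm_sym Asym[of a 2 1]\<close>)
    then show ?thesis unfolding AA[OF a] xnu[OF a] Af[OF a] omv Wv by simp
  qed
  have "Lop F om p v = (1/2) * om p v - ((\<Sum>a<CARD('n) - 2. (F p \<bullet> \<nu> a p) / 2 * Aform F (\<nu> a) p (W p) v) - gaussK F p * om p v)"
    unfolding part1[OF imm sW WT om G nf p v] by simp
  also have "(\<Sum>a<CARD('n) - 2. (F p \<bullet> \<nu> a p) / 2 * Aform F (\<nu> a) p (W p) v) - gaussK F p * om p v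
      = (\<Sum>a<CARD('n) - 2. (F p \<bullet> \<nu> a p) / 2 * Aform F (\<nu> a) p (W p) v - K a * om p v)"
    unfolding gK by (simp add: sum_subtractf sum_distrib_right)
  also have "\<dots> = (\<Sum>a<CARD('n) - 2. \<Sum>j\<in>UNIV. Aform F (\<nu> a) p (W p) (e j) * Aform F (\<nu> a) p (e j) v)"
    by (intro sum.cong refl per) simp
  finally show ?thesis .
qed

theorem lemma1p1:
  fixes U :: "(real^2) set" and F :: "real^2 \<Rightarrow> real^'n"
    and om :: "real^2 \<Rightarrow> real^'n \<Rightarrow> real" and W :: "real^2 \<Rightarrow> real^'n"
    and \<nu> :: "nat \<Rightarrow> real^2 \<Rightarrow> real^'n" and e :: "2 \<Rightarrow> real^'n"
    and p :: "real^2" and v :: "real^'n"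
  assumes "immersion U F"
    and "smooth_on2 U W"
    and "\<forall>q\<in>U. W q \<in> Tsp F q"
    and "\<forall>q\<in>U. \<forall>u\<in>Tsp F q. om q u = W q \<bullet> u"
    and "GHF U F om"
    and "normal_frame U F \<nu>"
    and "p \<in> U"
    and "v \<in> Tsp F p"
    and "onframe F p e"
  shows "(Lop F om p v = gaussK F p * om p v + (1/2) * om p v
           - (\<Sum>a<CARD('n) - 2. (F p \<bullet> \<nu> a p) / 2 * Aform F (\<nu> a) p (W p) v))
      \<and> (self_shrinker U F \<nu> \<longrightarrow>
         Lop F om p v = (1/2) * om p v
           - (\<Sum>a<CARD('n) - 2. \<Sum>j\<in>UNIV. Aform F (\<nu> a) p (W p) (e j) * Aform F (\<nu> a) p (e j) v))"
  using part1[OF assms(1-8)] part2[OF assms(1-9)] by blast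


end
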